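(* Let $n,n'$ be positive integers, let $\pi$ be a real representation of $S_n$ and $\pi'$ a real representation of $S_{n'}$, and let $\Pi=\pi\boxtimes\pi'$ be their external tensor product, a representation of $S_n\times S_{n'}$. Let $g=\frac12(\chi_\pi(1)-\chi_\pi(s_1))$ and $g'=\frac12(\chi_{\pi'}(1)-\chi_{\pi'}(s_1))$, where $s_1=(1,2)$ (in $S_n$, resp. $S_{n'}$). Then $\Pi$ is spinorial if and only if the restrictions of $\Pi$ to $S_n\times\{1\}$ and to $\{1\}\times S_{n'}$ are spinorial and $$(\deg\Pi+1)\,g g'\equiv 0 \pmod 2.$$
   Context: All representations are finite-dimensional real representations; $\chi_\pi$ is the character of $\pi$. (Note $g$ is the multiplicity of the eigenvalue $-1$ of $\pi(s_1)$ when $n\ge 2$; if $n=1$ then $g=0$.) A real representation of a finite group $G$ on a Euclidean space $V$ is regarded as a homomorphism $\pi:G\to\mathrm{O}(V)$. $\mathrm{Pin}(V)$ is the Pin group of $V$ (built from the Clifford algebra with $v^2=-|v|^2$), with the standard double cover $\rho:\mathrm{Pin}(V)\to\mathrm{O}(V)$ of kernel $\{\pm1\}$. A representation $\pi$ is spinorial if there is a homomorphism $\hat\pi:G\to\mathrm{Pin}(V)$ with $\rho\circ\hat\pi=\pi$. *)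

theory Defs
  imports "HOL-Algebra.Sym_Groups" "HOL-Algebra.Product_Groups" "Jordan_Normal_Form.Matrix"
begin

text \<open>A real representation of degree d of a group G on the Euclidean space R^d
  (standard inner product), i.e. a homomorphism G -> O(d), with O(d) the real d x d
  matrices A such that A^T A = 1.  Every finite-dimensional Euclidean space is isometric
  to some R^d, so this is no loss of generality.\<close>

definition orth_mat :: "nat \<Rightarrow> real mat \<Rightarrow> bool" where
  "orth_mat d A \<longleftrightarrow> A \<in> carrier_mat d d \<and> transpose_mat A * A = 1\<^sub>m d"

definition orth_rep :: "('g, 'b) monoid_scheme \<Rightarrow> nat \<Rightarrow> ('g \<Rightarrow> real mat) \<Rightarrow> bool" where
  "orth_rep G d \<pi> \<longleftrightarrow>
     (\<forall>g\<in>carrier G. orth_mat d (\<pi> g)) \<and>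
     (\<forall>g\<in>carrier G. \<forall>h\<in>carrier G. \<pi> (g \<otimes>\<^bsub>G\<^esub> h) = \<pi> g * \<pi> h)"

definition character :: "('g \<Rightarrow> real mat) \<Rightarrow> 'g \<Rightarrow> real" where
  "character \<pi> g = (\<Sum>i<dim_row (\<pi> g). \<pi> g $$ (i, i))"

text \<open>Kronecker product: R^d (x) R^d' is identified with R^(d d') via
  e_i (x) e_j |-> e_(i d' + j).\<close>
definition kron :: "real mat \<Rightarrow> real mat \<Rightarrow> real mat" where
  "kron A B = mat (dim_row A * dim_row B) (dim_col A * dim_col B)
     (\<lambda>(i, j). A $$ (i div dim_row B, j div dim_col B) * B $$ (i mod dim_row B, j mod dim_col B))"

definition ext_tensor :: "('g \<Rightarrow> real mat) \<Rightarrow> ('h \<Rightarrow> real mat) \<Rightarrow> ('g \<times> 'h \<Rightarrow> real mat)" where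
  "ext_tensor \<pi> \<pi>' = (\<lambda>(g, h). kron (\<pi> g) (\<pi>' h))"

definition s1 :: "nat \<Rightarrow> nat" where
  "s1 = Transposition.transpose 1 2"

definition gval :: "nat \<Rightarrow> nat \<Rightarrow> ((nat \<Rightarrow> nat) \<Rightarrow> real mat) \<Rightarrow> real" where
  "gval n d \<pi> = (if n \<ge> 2 then (real d - character \<pi> s1) / 2 else 0)"

text \<open>Elements are coefficient functions on the basis e_S, S a subset of {0..<d},
  e_S = e_(i_1) ... e_(i_k) for i_1 < ... < i_k; coefficients outside are 0.\<close>

type_synonym cl = "nat set \<Rightarrow> real"

definition cl_carrier :: "nat \<Rightarrow> cl set" where
  "cl_carrier d = {x. \<forall>S. \<not> S \<subseteq> {0..<d} \<longrightarrow> x S = 0}"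

text \<open>e_A e_B = cl_sign A B e_(A symdiff B), using e_i e_j = - e_j e_i (i \<noteq> j), e_i^2 = -1.\<close>
definition cl_sign :: "nat set \<Rightarrow> nat set \<Rightarrow> real" where
  "cl_sign A B = (-1) ^ (card {(a, b). a \<in> A \<and> b \<in> B \<and> b < a} + card (A \<inter> B))"

definition cl_mult :: "nat \<Rightarrow> cl \<Rightarrow> cl \<Rightarrow> cl" where
  "cl_mult d x y = (\<lambda>C. if C \<subseteq> {0..<d} then
      (\<Sum>A\<in>Pow {0..<d}. cl_sign A (A \<union> C - A \<inter> C) * x A * y (A \<union> C - A \<inter> C)) else 0)"

definition cl_one :: cl where
  "cl_one = (\<lambda>S. if S = {} then 1 else 0)"

definition cl_vec :: "nat \<Rightarrow> real vec \<Rightarrow> cl" where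
  "cl_vec d v = (\<lambda>S. if (\<exists>i<d. S = {i}) then v $ (THE i. S = {i}) else 0)"

definition cl_alpha :: "cl \<Rightarrow> cl" where
  "cl_alpha x = (\<lambda>S. (-1) ^ card S * x S)"

definition cl_inv :: "nat \<Rightarrow> cl \<Rightarrow> cl" where
  "cl_inv d x = (THE y. y \<in> cl_carrier d \<and> cl_mult d x y = cl_one \<and> cl_mult d y x = cl_one)"

text \<open>Pin(V): the subgroup of units of Cl(V) generated by the unit vectors,
  i.e. the set of all finite products of unit vectors.\<close>
inductive_set Pin :: "nat \<Rightarrow> cl set" for d where
  Pin_one: "cl_one \<in> Pin d"
| Pin_mult: "\<lbrakk>v \<in> carrier_vec d; v \<bullet> v = 1; x \<in> Pin d\<rbrakk> \<Longrightarrow> cl_mult d (cl_vec d v) x \<in> Pin d"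

text \<open>The standard double cover rho : Pin(V) -> O(V), the twisted adjoint action
  rho(x) v = alpha(x) v x^(-1), written as a d x d matrix (column j = rho(x) e_j).\<close>
definition pin_rho :: "nat \<Rightarrow> cl \<Rightarrow> real mat" where
  "pin_rho d x = mat d d (\<lambda>(i, j).
      cl_mult d (cl_mult d (cl_alpha x) (cl_vec d (unit_vec d j))) (cl_inv d x) {i})"

definition spinorial :: "('g, 'b) monoid_scheme \<Rightarrow> nat \<Rightarrow> ('g \<Rightarrow> real mat) \<Rightarrow> bool" where
  "spinorial G d \<pi> \<longleftrightarrow>
     (\<exists>\<pi>h. (\<forall>g\<in>carrier G. \<pi>h g \<in> Pin d \<and> pin_rho d (\<pi>h g) = \<pi> g) \<and>
           (\<forall>g\<in>carrier G. \<forall>h\<in>carrier G. \<pi>h (g \<otimes>\<^bsub>G\<^esub> h) = cl_mult d (\<pi>h g) (\<pi>h h)))"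

end

theory Submission
  imports Defs
begin

abbreviation symd :: "'a set \<Rightarrow> 'a set \<Rightarrow> 'a set" where
  "symd A B \<equiv> A \<union> B - A \<inter> B"

lemma symd_eq_iff: "(symd A B = C) \<longleftrightarrow> (B = symd A C)"
  by blast

definition ic :: "nat set \<Rightarrow> nat set \<Rightarrow> nat" where
  "ic A B = card {(a, b). a \<in> A \<and> b \<in> B \<and> b < a}"

lemma cl_sign_ic: "cl_sign A B = (-1) ^ (ic A B + card (A \<inter> B))"
  by (simp add: cl_sign_def ic_def)

lemma card_symd: assumes "finite X" "finite Y"
  shows "card (symd X Y) + 2 * card (X \<inter> Y) = card X + card Y"
proof -
  have "card (X \<union> Y) + card (X \<inter> Y) = card X + card Y"
    using card_Un_Int[OF assms] by simp
  moreover have "card (X \<union> Y) = card (symd X Y) + card (X \<inter> Y)"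
  proof -
    have "card (symd X Y \<union> (X \<inter> Y)) = card (symd X Y) + card (X \<inter> Y)"
      by (rule card_Un_disjoint) (use assms in auto)
    moreover have "symd X Y \<union> (X \<inter> Y) = X \<union> Y" by blast
    ultimately show ?thesis by simp
  qed
  ultimately show ?thesis by simp
qed

lemma ic_symd_left: assumes "finite A" "finite B" "finite C"
  shows "ic (symd A B) C + 2 * ic (A \<inter> B) C = ic A C + ic B C"
proof -
  define P where "P X = {(a, b). a \<in> X \<and> b \<in> C \<and> b < a}" for X
  have fin: "finite X \<Longrightarrow> finite (P X)" for X
    by (rule finite_subset[of _ "X \<times> C"]) (auto simp: P_def assms)
  have "P (symd A B) = symd (P A) (P B)" "P (A \<inter> B) = P A \<inter> P B"
    by (auto simp: P_def)
  moreover have "ic X C = card (P X)" for X by (simp add: ic_def P_def)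
  ultimately show ?thesis using card_symd[OF fin[OF assms(1)] fin[OF assms(2)]]
    by simp
qed

lemma ic_symd_right: assumes "finite A" "finite B" "finite C"
  shows "ic A (symd B C) + 2 * ic A (B \<inter> C) = ic A B + ic A C"
proof -
  define P where "P X = {(a, b). a \<in> A \<and> b \<in> X \<and> b < a}" for X
  have fin: "finite X \<Longrightarrow> finite (P X)" for X
    by (rule finite_subset[of _ "A \<times> X"]) (auto simp: P_def assms)
  have "P (symd B C) = symd (P B) (P C)" "P (B \<inter> C) = P B \<inter> P C"
    by (auto simp: P_def)
  moreover have "ic A X = card (P X)" for X by (simp add: ic_def P_def)
  ultimately show ?thesis using card_symd[OF fin[OF assms(2)] fin[OF assms(3)]]
    by simp
qed

lemma minus_one_pow_parity: assumes "e1 + 2 * X = e2 + 2 * (Y::nat)"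
  shows "(-1::real) ^ e1 = (-1) ^ e2"
proof -
  have "(-1::real) ^ e1 = (-1) ^ (e1 + 2 * X)" by (simp add: power_add power_mult)
  also have "\<dots> = (-1) ^ (e2 + 2 * Y)" using assms by simp
  also have "\<dots> = (-1) ^ e2" by (simp add: power_add power_mult)
  finally show ?thesis .
qed

lemma cl_sign_cocycle: assumes "finite A" "finite B" "finite C"
  shows "cl_sign A B * cl_sign (symd A B) C = cl_sign A (symd B C) * cl_sign B C"
proof -
  have c1: "card (symd A B \<inter> C) + 2 * card (A \<inter> B \<inter> C) = card (A \<inter> C) + card (B \<inter> C)"
  proof -
    have "symd A B \<inter> C = symd (A \<inter> C) (B \<inter> C)" "A \<inter> B \<inter> C = (A \<inter> C) \<inter> (B \<inter> C)" by blast+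
    then show ?thesis using card_symd[of "A \<inter> C" "B \<inter> C"] assms by simp
  qed
  have c2: "card (A \<inter> symd B C) + 2 * card (A \<inter> B \<inter> C) = card (A \<inter> B) + card (A \<inter> C)"
  proof -
    have "A \<inter> symd B C = symd (A \<inter> B) (A \<inter> C)" "A \<inter> B \<inter> C = (A \<inter> B) \<inter> (A \<inter> C)" by blast+
    then show ?thesis using card_symd[of "A \<inter> B" "A \<inter> C"] assms by simp
  qed
  have i1: "ic (symd A B) C + 2 * ic (A \<inter> B) C = ic A C + ic B C"
    by (rule ic_symd_left[OF assms])
  have i2: "ic A (symd B C) + 2 * ic A (B \<inter> C) = ic A B + ic A C"
    by (rule ic_symd_right[OF assms])
  have "(-1::real) ^ ((ic A B + card (A \<inter> B)) + (ic (symd A B) C + card (symd A B \<inter> C)))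
      = (-1) ^ ((ic A (symd B C) + card (A \<inter> symd B C)) + (ic B C + card (B \<inter> C)))"
    by (rule minus_one_pow_parity[where X = "ic (A \<inter> B) C + card (A \<inter> B \<inter> C)"
          and Y = "ic A (B \<inter> C) + card (A \<inter> B \<inter> C)"]) (use c1 c2 i1 i2 in \<open>unfold distrib_left; linarith\<close>)
  then show ?thesis by (simp add: cl_sign_ic power_add)
qed

lemma Pow_finite_mem: "A \<in> Pow {0..<(d::nat)} \<Longrightarrow> finite A"
  using finite_subset[of A "{0..<d}"] by auto

lemma cl_mult_def_pt: "C \<subseteq> {0..<d} \<Longrightarrow>
  cl_mult d x y C = (\<Sum>A\<in>Pow {0..<d}. cl_sign A (symd A C) * x A * y (symd A C))"
  by (simp add: cl_mult_def)

lemma cl_mult_out: "\<not> C \<subseteq> {0..<d} \<Longrightarrow> cl_mult d x y C = 0"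
  by (simp add: cl_mult_def)

lemma symd_symd: "symd A (symd A C) = C"
  by blast

lemma sum_Pow_symd_reindex: assumes "A \<in> Pow {0..<d}"
  shows "(\<Sum>C\<in>Pow {0..<d}. f C) = (\<Sum>B\<in>Pow {0..<d}. f (symd A B))"
  by (rule sum.reindex_bij_witness[where i = "\<lambda>C. symd A C" and j = "\<lambda>C. symd A C"])
     (use assms in \<open>auto simp: symd_symd\<close>)

lemma cl_assoc: "cl_mult d (cl_mult d x y) z = cl_mult d x (cl_mult d y z)"
proof
  fix D
  show "cl_mult d (cl_mult d x y) z D = cl_mult d x (cl_mult d y z) D"
  proof (cases "D \<subseteq> {0..<d}")
    case False
    then show ?thesis by (simp add: cl_mult_out)
  next
    case True
    let ?P = "Pow {0..<d}"
    have "cl_mult d (cl_mult d x y) z D =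
       (\<Sum>C\<in>?P. \<Sum>A\<in>?P. cl_sign C (symd C D) * cl_sign A (symd A C) * x A * y (symd A C) * z (symd C D))"
      using True by (auto simp: cl_mult_def_pt sum_distrib_left sum_distrib_right mult_ac intro!: sum.cong)
    also have "\<dots> = (\<Sum>A\<in>?P. \<Sum>C\<in>?P. cl_sign C (symd C D) * cl_sign A (symd A C) * x A * y (symd A C) * z (symd C D))"
      by (rule sum.swap)
    also have "\<dots> = (\<Sum>A\<in>?P. \<Sum>B\<in>?P. cl_sign (symd A B) (symd (symd A B) D) * cl_sign A B * x A * y B * z (symd (symd A B) D))"
    proof (rule sum.cong[OF refl])
      fix A assume A: "A \<in> ?P"
      show "(\<Sum>C\<in>?P. cl_sign C (symd C D) * cl_sign A (symd A C) * x A * y (symd A C) * z (symd C D)) =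
        (\<Sum>B\<in>?P. cl_sign (symd A B) (symd (symd A B) D) * cl_sign A B * x A * y B * z (symd (symd A B) D))"
        by (subst sum_Pow_symd_reindex[OF A]) (rule sum.cong[OF refl], auto intro!: arg_cong2[where f = "\<lambda>a b. a * b"] arg_cong[where f = y] arg_cong[where f = "cl_sign A"])
    qed
    also have "\<dots> = (\<Sum>A\<in>?P. \<Sum>B\<in>?P. cl_sign A (symd A D) * x A * (cl_sign B (symd B (symd A D)) * y B * z (symd B (symd A D))))"
    proof (intro sum.cong[OF refl])
      fix A B assume A: "A \<in> ?P" and B: "B \<in> ?P"
      have fin: "finite A" "finite B" "finite (symd (symd A B) D)"
        using A B True by (auto intro: finite_subset)
      have e1: "symd B (symd (symd A B) D) = symd A D" by blast
      have e2: "symd B (symd A D) = symd (symd A B) D" by blast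
      have "cl_sign A B * cl_sign (symd A B) (symd (symd A B) D) = cl_sign A (symd A D) * cl_sign B (symd B (symd A D))"
        using cl_sign_cocycle[OF fin] unfolding e1 e2 by simp
      then show "cl_sign (symd A B) (symd (symd A B) D) * cl_sign A B * x A * y B * z (symd (symd A B) D) =
        cl_sign A (symd A D) * x A * (cl_sign B (symd B (symd A D)) * y B * z (symd B (symd A D)))"
        unfolding e2 by (simp add: mult_ac)
    qed
    also have "\<dots> = cl_mult d x (cl_mult d y z) D"
    proof -
      have "symd A D \<subseteq> {0..<d}" if "A \<in> ?P" for A using that True by auto
      then show ?thesis using True
        by (auto simp: cl_mult_def_pt sum_distrib_left intro!: sum.cong)
    qed
    finally show ?thesis .
  qed
qed

lemma cl_mult_alt: "cl_mult d x y C = (\<Sum>A\<in>Pow {0..<d}. \<Sum>B\<in>Pow {0..<d}.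
    if symd A B = C then cl_sign A B * x A * y B else 0)"
proof (cases "C \<subseteq> {0..<d}")
  case True
  have "cl_mult d x y C = (\<Sum>A\<in>Pow {0..<d}. cl_sign A (symd A C) * x A * y (symd A C))"
    using True by (simp add: cl_mult_def)
  also have "\<dots> = (\<Sum>A\<in>Pow {0..<d}. \<Sum>B\<in>Pow {0..<d}.
    if symd A B = C then cl_sign A B * x A * y B else 0)"
  proof (rule sum.cong[OF refl])
    fix A assume A: "A \<in> Pow {0..<d}"
    have "(\<Sum>B\<in>Pow {0..<d}. if symd A B = C then cl_sign A B * x A * y B else 0)
       = (\<Sum>B\<in>Pow {0..<d}. if B = symd A C then cl_sign A B * x A * y B else 0)"
      by (rule sum.cong[OF refl]) (simp only: symd_eq_iff)
    also have "\<dots> = cl_sign A (symd A C) * x A * y (symd A C)"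
      using A True by (subst sum.delta) auto
    finally show "cl_sign A (symd A C) * x A * y (symd A C) = (\<Sum>B\<in>Pow {0..<d}.
      if symd A B = C then cl_sign A B * x A * y B else 0)" by simp
  qed
  finally show ?thesis .
next
  case False
  have "cl_mult d x y C = 0" using False by (simp add: cl_mult_def)
  moreover have "(\<Sum>A\<in>Pow {0..<d}. \<Sum>B\<in>Pow {0..<d}.
    if symd A B = C then cl_sign A B * x A * y B else 0) = 0"
    by (rule sum.neutral, rule ballI, rule sum.neutral) (use False in auto)
  ultimately show ?thesis by simp
qed

definition csc :: "real \<Rightarrow> cl \<Rightarrow> cl" where "csc c x = (\<lambda>S. c * x S)"
definition cadd :: "cl \<Rightarrow> cl \<Rightarrow> cl" where "cadd x y = (\<lambda>S. x S + y S)"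

lemma cl_mult_carrier[simp]: "cl_mult d x y \<in> cl_carrier d"
  by (simp add: cl_carrier_def cl_mult_def)

lemma cl_one_carrier[simp]: "cl_one \<in> cl_carrier d"
  by (simp add: cl_carrier_def cl_one_def)

lemma cl_vec_carrier[simp]: "cl_vec d v \<in> cl_carrier d"
  by (auto simp: cl_carrier_def cl_vec_def)

lemma csc_carrier[simp]: "x \<in> cl_carrier d \<Longrightarrow> csc c x \<in> cl_carrier d"
  by (simp add: cl_carrier_def csc_def)

lemma cadd_carrier[simp]: "x \<in> cl_carrier d \<Longrightarrow> y \<in> cl_carrier d \<Longrightarrow> cadd x y \<in> cl_carrier d"
  by (simp add: cl_carrier_def cadd_def)

lemma cl_carrierD: "x \<in> cl_carrier d \<Longrightarrow> \<not> S \<subseteq> {0..<d} \<Longrightarrow> x S = 0"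
  by (simp add: cl_carrier_def)

lemma cl_sign_empty_left[simp]: "cl_sign {} B = 1"
  by (simp add: cl_sign_def)

lemma cl_sign_empty_right[simp]: "cl_sign A {} = 1"
  by (simp add: cl_sign_def)

lemma cl_one_left: assumes "x \<in> cl_carrier d" shows "cl_mult d cl_one x = x"
proof
  fix C show "cl_mult d cl_one x C = x C"
  proof (cases "C \<subseteq> {0..<d}")
    case True
    have "cl_mult d cl_one x C = (\<Sum>A\<in>Pow {0..<d}. if A = {} then x (symd A C) else 0)"
      unfolding cl_mult_def_pt[OF True] by (rule sum.cong) (auto simp: cl_one_def)
    also have "\<dots> = x C" by (subst sum.delta) auto
    finally show ?thesis .
  qed (use assms in \<open>simp add: cl_mult_out cl_carrierD\<close>)
qed

lemma cl_one_right: assumes "x \<in> cl_carrier d" shows "cl_mult d x cl_one = x"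
proof
  fix C show "cl_mult d x cl_one C = x C"
  proof (cases "C \<subseteq> {0..<d}")
    case True
    have "cl_mult d x cl_one C = (\<Sum>A\<in>Pow {0..<d}. if A = C then x A else 0)"
      unfolding cl_mult_def_pt[OF True]
    proof (rule sum.cong[OF refl])
      fix A assume "A \<in> Pow {0..<d}"
      have "symd A C = {} \<longleftrightarrow> A = C" by blast
      then show "cl_sign A (symd A C) * x A * cl_one (symd A C) = (if A = C then x A else 0)"
        by (auto simp: cl_one_def)
    qed
    also have "\<dots> = x C" using True by (subst sum.delta) auto
    finally show ?thesis .
  qed (use assms in \<open>simp add: cl_mult_out cl_carrierD\<close>)
qed

lemma cl_mult_csc_left: "cl_mult d (csc c x) y = csc c (cl_mult d x y)"
  by (auto simp: cl_mult_def csc_def sum_distrib_left mult_ac intro!: sum.cong)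

lemma cl_mult_csc_right: "cl_mult d x (csc c y) = csc c (cl_mult d x y)"
  by (auto simp: cl_mult_def csc_def sum_distrib_left mult_ac intro!: sum.cong)

lemma cl_mult_cadd_left: "cl_mult d (cadd x y) z = cadd (cl_mult d x z) (cl_mult d y z)"
  by (auto simp: cl_mult_def cadd_def sum.distrib algebra_simps intro!: sum.cong)

lemma cl_mult_cadd_right: "cl_mult d x (cadd y z) = cadd (cl_mult d x y) (cl_mult d x z)"
  by (auto simp: cl_mult_def cadd_def sum.distrib algebra_simps intro!: sum.cong)

lemma csc_csc[simp]: "csc a (csc b x) = csc (a * b) x"
  by (simp add: csc_def mult.assoc)

lemma csc_one[simp]: "csc 1 x = x"
  by (simp add: csc_def)

lemma csc_zero_eq: "csc c x = x \<Longrightarrow> c \<noteq> 1 \<Longrightarrow> x = (\<lambda>S. 0)"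
  by (auto simp: csc_def fun_eq_iff)

lemma cl_alpha_mult: "cl_alpha (cl_mult d x y) = cl_mult d (cl_alpha x) (cl_alpha y)"
proof
  fix C show "cl_alpha (cl_mult d x y) C = cl_mult d (cl_alpha x) (cl_alpha y) C"
  proof (cases "C \<subseteq> {0..<d}")
    case True
    have "(-1::real) ^ card C = (-1) ^ card A * (-1) ^ card (symd A C)" if "A \<in> Pow {0..<d}" for A
    proof -
      have fin: "finite A" "finite C" using that True by (auto intro: finite_subset)
      have "(-1::real) ^ card C = (-1) ^ (card A + card (symd A C))"
        by (rule minus_one_pow_parity[where X = "card A" and Y = "card (A \<inter> C)"])
           (use card_symd[OF fin] in linarith)
      then show ?thesis by (simp add: power_add)
    qed
    note eq = this
    show ?thesis
      unfolding cl_alpha_def cl_mult_def_pt[OF True] sum_distrib_left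
    proof (rule sum.cong[OF refl])
      fix A assume A: "A \<in> Pow {0..<d}"
      show "(-1) ^ card C * (cl_sign A (symd A C) * x A * y (symd A C)) =
        cl_sign A (symd A C) * ((-1) ^ card A * x A) * ((-1) ^ card (symd A C) * y (symd A C))"
        unfolding eq[OF A] by (simp only: mult_ac)
    qed
  qed (simp add: cl_alpha_def cl_mult_out)
qed

lemma cl_alpha_one[simp]: "cl_alpha cl_one = cl_one"
  by (auto simp: cl_alpha_def cl_one_def)

lemma cl_alpha_vec: "cl_alpha (cl_vec d v) = csc (-1) (cl_vec d v)"
  by (auto simp: cl_alpha_def cl_vec_def csc_def fun_eq_iff)

lemma cl_alpha_csc: "cl_alpha (csc c x) = csc c (cl_alpha x)"
  by (auto simp: cl_alpha_def csc_def fun_eq_iff)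

lemma cl_alpha_carrier[simp]: "x \<in> cl_carrier d \<Longrightarrow> cl_alpha x \<in> cl_carrier d"
  by (simp add: cl_carrier_def cl_alpha_def)

lemma cl_vec_single: "i < d \<Longrightarrow> cl_vec d v {i} = v $ i"
  by (auto simp: cl_vec_def)

lemma sum_Pow_vec: "(\<Sum>A\<in>Pow {0..<d}. cl_vec d v A * g A) = (\<Sum>i<d. v $ i * g {i})"
proof -
  have "(\<Sum>A\<in>Pow {0..<d}. cl_vec d v A * g A) = (\<Sum>A\<in>(\<lambda>i. {i}) ` {0..<d}. cl_vec d v A * g A)"
    by (rule sum.mono_neutral_right) (auto simp: cl_vec_def)
  also have "\<dots> = (\<Sum>i\<in>{0..<d}. cl_vec d v {i} * g {i})"
    by (subst sum.reindex) (auto simp: inj_on_def)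
  also have "\<dots> = (\<Sum>i<d. v $ i * g {i})"
    by (rule sum.cong) (auto simp: cl_vec_single)
  finally show ?thesis .
qed

lemma sum_Pow_vec': "(\<Sum>A\<in>Pow {0..<d}. g A * cl_vec d v A) = (\<Sum>i<d. g {i} * v $ i)"
  using sum_Pow_vec[of d v g] by (simp add: mult.commute)

lemma cl_sign_single: "cl_sign {i} {j} = (if i = j then -1 else if j < i then -1 else 1)"
proof -
  have "{(a, b). a \<in> {i} \<and> b \<in> {j} \<and> b < a} = (if j < i then {(i, j)} else {})" by auto
  then show ?thesis by (auto simp: cl_sign_def)
qed

lemma cl_vec_mult_vec: "cl_mult d (cl_vec d u) (cl_vec d w) C =
   (\<Sum>i<d. \<Sum>j<d. if symd {i} {j} = C then cl_sign {i} {j} * u $ i * w $ j else 0)"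
proof -
  have "cl_mult d (cl_vec d u) (cl_vec d w) C = (\<Sum>A\<in>Pow {0..<d}. cl_vec d u A *
      (\<Sum>B\<in>Pow {0..<d}. (if symd A B = C then cl_sign A B else 0) * cl_vec d w B))"
    by (auto simp: cl_mult_alt sum_distrib_left intro!: sum.cong)
  also have "\<dots> = (\<Sum>i<d. u $ i * (\<Sum>j<d. (if symd {i} {j} = C then cl_sign {i} {j} else 0) * w $ j))"
    by (simp add: sum_Pow_vec sum_Pow_vec')
  also have "\<dots> = (\<Sum>i<d. \<Sum>j<d. if symd {i} {j} = C then cl_sign {i} {j} * u $ i * w $ j else 0)"
    by (auto simp: sum_distrib_left intro!: sum.cong)
  finally show ?thesis .
qed

lemma cl_vec_anticomm: assumes "w \<in> carrier_vec d"
  shows "cadd (cl_mult d (cl_vec d u) (cl_vec d w)) (cl_mult d (cl_vec d w) (cl_vec d u))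
     = csc (-2 * (u \<bullet> w)) cl_one"
proof
  fix C
  have "cadd (cl_mult d (cl_vec d u) (cl_vec d w)) (cl_mult d (cl_vec d w) (cl_vec d u)) C
     = (\<Sum>i<d. \<Sum>j<d. if symd {i} {j} = C then cl_sign {i} {j} * u $ i * w $ j else 0)
     + (\<Sum>j<d. \<Sum>i<d. if symd {j} {i} = C then cl_sign {j} {i} * w $ j * u $ i else 0)"
    by (simp add: cadd_def cl_vec_mult_vec)
  also have "(\<Sum>j<d. \<Sum>i<d. if symd {j} {i} = C then cl_sign {j} {i} * w $ j * u $ i else 0)
     = (\<Sum>i<d. \<Sum>j<d. if symd {i} {j} = C then cl_sign {j} {i} * u $ i * w $ j else 0)"
    by (subst sum.swap) (auto simp: Un_commute Int_commute mult_ac intro!: sum.cong)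
  also have "(\<Sum>i<d. \<Sum>j<d. if symd {i} {j} = C then cl_sign {i} {j} * u $ i * w $ j else 0)
     + (\<Sum>i<d. \<Sum>j<d. if symd {i} {j} = C then cl_sign {j} {i} * u $ i * w $ j else 0)
     = (\<Sum>i<d. \<Sum>j<d. if j = i then (if C = {} then -2 * u $ i * w $ j else 0) else 0)"
    unfolding sum.distrib[symmetric]
    by (rule sum.cong[OF refl], rule sum.cong[OF refl]) (auto simp: cl_sign_single)
  also have "\<dots> = (\<Sum>i<d. if C = {} then -2 * u $ i * w $ i else 0)"
    by (rule sum.cong[OF refl]) (subst sum.delta, auto)
  also have "\<dots> = csc (-2 * (u \<bullet> w)) cl_one C"
    using assms by (auto simp: csc_def cl_one_def scalar_prod_def sum_distrib_left atLeast0LessThan mult_ac)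
  finally show "cadd (cl_mult d (cl_vec d u) (cl_vec d w)) (cl_mult d (cl_vec d w) (cl_vec d u)) C
     = csc (-2 * (u \<bullet> w)) cl_one C" .
qed

definition unitv :: "nat \<Rightarrow> real vec \<Rightarrow> bool" where
  "unitv d u \<longleftrightarrow> u \<in> carrier_vec d \<and> u \<bullet> u = 1"

lemma cl_vec_sq: assumes "unitv d u"
  shows "cl_mult d (cl_vec d u) (cl_vec d u) = csc (-1) cl_one"
proof -
  have "cadd (cl_mult d (cl_vec d u) (cl_vec d u)) (cl_mult d (cl_vec d u) (cl_vec d u)) = csc (-2) cl_one"
    using cl_vec_anticomm[of u d u] assms by (simp add: unitv_def)
  then have "\<And>S. cl_mult d (cl_vec d u) (cl_vec d u) S + cl_mult d (cl_vec d u) (cl_vec d u) S = -2 * cl_one S"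
    by (simp add: cadd_def csc_def fun_eq_iff)
  then show ?thesis by (simp add: csc_def fun_eq_iff)
qed

lemma cl_vec_orth: assumes "w \<in> carrier_vec d" "u \<bullet> w = 0"
  shows "cl_mult d (cl_vec d u) (cl_vec d w) = csc (-1) (cl_mult d (cl_vec d w) (cl_vec d u))"
proof -
  have "cadd (cl_mult d (cl_vec d u) (cl_vec d w)) (cl_mult d (cl_vec d w) (cl_vec d u)) = csc 0 cl_one"
    using cl_vec_anticomm[of w d u] assms by simp
  then have "\<And>S. cl_mult d (cl_vec d u) (cl_vec d w) S + cl_mult d (cl_vec d w) (cl_vec d u) S = 0"
    by (simp add: cadd_def csc_def fun_eq_iff)
  then show ?thesis by (simp add: csc_def fun_eq_iff add_eq_0_iff2)
qed

lemma cl_vec_lin: "cl_vec d (vec d (\<lambda>i. w $ i + c * u $ i)) = cadd (cl_vec d w) (csc c (cl_vec d u))"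
  by (auto simp: cl_vec_def cadd_def csc_def fun_eq_iff)

lemma cl_vec_neg: "cl_vec d (vec d (\<lambda>i. - u $ i)) = csc (-1) (cl_vec d u)"
  by (auto simp: cl_vec_def csc_def fun_eq_iff)

lemma unitv_neg: "unitv d u \<Longrightarrow> unitv d (vec d (\<lambda>i. - u $ i))"
  by (auto simp: unitv_def scalar_prod_def)

lemma cl_uwu: assumes u: "unitv d u" and w: "w \<in> carrier_vec d"
  shows "cl_mult d (cl_mult d (cl_vec d u) (cl_vec d w)) (cl_vec d u)
     = cl_vec d (vec d (\<lambda>i. w $ i + (- 2 * (u \<bullet> w)) * u $ i))"
proof -
  have uw: "cl_mult d (cl_vec d u) (cl_vec d w) =
      cadd (csc (-1) (cl_mult d (cl_vec d w) (cl_vec d u))) (csc (-2 * (u \<bullet> w)) cl_one)"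
  proof
    fix S
    have "cl_mult d (cl_vec d u) (cl_vec d w) S + cl_mult d (cl_vec d w) (cl_vec d u) S = -2 * (u \<bullet> w) * cl_one S"
      using fun_cong[OF cl_vec_anticomm[OF w, of u], of S] by (simp add: cadd_def csc_def)
    then show "cl_mult d (cl_vec d u) (cl_vec d w) S =
      cadd (csc (-1) (cl_mult d (cl_vec d w) (cl_vec d u))) (csc (-2 * (u \<bullet> w)) cl_one) S"
      by (simp add: cadd_def csc_def)
  qed
  have "cl_mult d (cl_mult d (cl_vec d u) (cl_vec d w)) (cl_vec d u)
     = cadd (csc (-1) (cl_mult d (cl_vec d w) (cl_mult d (cl_vec d u) (cl_vec d u)))) (csc (-2 * (u \<bullet> w)) (cl_vec d u))"
    unfolding uw cl_mult_cadd_left cl_mult_csc_left cl_assoc by (simp add: cl_one_left)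
  also have "\<dots> = cadd (cl_vec d w) (csc (-2 * (u \<bullet> w)) (cl_vec d u))"
    unfolding cl_vec_sq[OF u] cl_mult_csc_right by (simp add: cl_one_right)
  finally show ?thesis unfolding cl_vec_lin .
qed

lemma Pin_carrier: "x \<in> Pin d \<Longrightarrow> x \<in> cl_carrier d"
  by (induction rule: Pin.induct) auto

lemma Pin_mult_closed: "x \<in> Pin d \<Longrightarrow> y \<in> Pin d \<Longrightarrow> cl_mult d x y \<in> Pin d"
proof (induction rule: Pin.induct)
  case Pin_one
  then show ?case by (simp add: cl_one_left Pin_carrier)
next
  case (Pin_mult v x)
  then show ?case by (simp add: cl_assoc Pin.Pin_mult)
qed

lemma Pin_vec: "unitv d u \<Longrightarrow> cl_vec d u \<in> Pin d"
  using Pin.Pin_mult[OF _ _ Pin.Pin_one, of u d] by (simp add: unitv_def cl_one_right)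

lemma Pin_neg_vec: "unitv d u \<Longrightarrow> csc (-1) (cl_vec d u) \<in> Pin d"
  using Pin_vec[OF unitv_neg] by (simp add: cl_vec_neg)

lemma Pin_inverse: "x \<in> Pin d \<Longrightarrow> \<exists>y\<in>Pin d. cl_mult d x y = cl_one \<and> cl_mult d y x = cl_one"
proof (induction rule: Pin.induct)
  case Pin_one
  then show ?case by (intro bexI[of _ cl_one]) (auto simp: cl_one_left Pin.Pin_one)
next
  case (Pin_mult v x)
  then obtain y where y: "y \<in> Pin d" "cl_mult d x y = cl_one" "cl_mult d y x = cl_one" by blast
  have u: "unitv d v" using Pin_mult by (simp add: unitv_def)
  let ?y = "cl_mult d y (csc (-1) (cl_vec d v))"
  have "?y \<in> Pin d" by (rule Pin_mult_closed[OF y(1) Pin_neg_vec[OF u]])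
  moreover have "cl_mult d (cl_mult d (cl_vec d v) x) ?y = cl_one"
  proof -
    have "cl_mult d (cl_mult d (cl_vec d v) x) ?y = csc (-1) (cl_mult d (cl_vec d v) (cl_mult d (cl_mult d x y) (cl_vec d v)))"
      by (simp add: cl_assoc cl_mult_csc_right)
    also have "\<dots> = cl_one" by (simp add: y cl_one_left cl_vec_sq[OF u] cl_mult_csc_right)
    finally show ?thesis .
  qed
  moreover have "cl_mult d ?y (cl_mult d (cl_vec d v) x) = cl_one"
  proof -
    have "cl_mult d ?y (cl_mult d (cl_vec d v) x) = csc (-1) (cl_mult d y (cl_mult d (cl_mult d (cl_vec d v) (cl_vec d v)) x))"
      by (simp add: cl_assoc cl_mult_csc_right cl_mult_csc_left)
    also have "\<dots> = cl_one" using Pin_carrier[OF Pin_mult(3)]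
      by (simp add: y cl_one_left cl_vec_sq[OF u] cl_mult_csc_right cl_mult_csc_left)
    finally show ?thesis .
  qed
  ultimately show ?case by blast
qed

lemma cl_inv_eq: assumes x: "x \<in> Pin d" and y: "y \<in> cl_carrier d"
  and xy: "cl_mult d x y = cl_one" and yx: "cl_mult d y x = cl_one"
  shows "cl_inv d x = y"
  unfolding cl_inv_def
proof (rule the_equality)
  show "y \<in> cl_carrier d \<and> cl_mult d x y = cl_one \<and> cl_mult d y x = cl_one" using y xy yx by simp
next
  fix z assume z: "z \<in> cl_carrier d \<and> cl_mult d x z = cl_one \<and> cl_mult d z x = cl_one"
  have "z = cl_mult d (cl_mult d y x) z" using z by (simp add: yx cl_one_left)
  also have "\<dots> = cl_mult d y (cl_mult d x z)" by (simp add: cl_assoc)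
  also have "\<dots> = y" using z y by (simp add: cl_one_right)
  finally show "z = y" .
qed

lemma cl_inv_Pin: assumes x: "x \<in> Pin d"
  shows "cl_inv d x \<in> Pin d" "cl_mult d x (cl_inv d x) = cl_one" "cl_mult d (cl_inv d x) x = cl_one"
proof -
  obtain y where y: "y \<in> Pin d" "cl_mult d x y = cl_one" "cl_mult d y x = cl_one"
    using Pin_inverse[OF x] by blast
  have "cl_inv d x = y" by (rule cl_inv_eq[OF x Pin_carrier[OF y(1)] y(2,3)])
  then show "cl_inv d x \<in> Pin d" "cl_mult d x (cl_inv d x) = cl_one" "cl_mult d (cl_inv d x) x = cl_one"
    using y by auto
qed

lemma cl_inv_mult: assumes x: "x \<in> Pin d" and y: "y \<in> Pin d"
  shows "cl_inv d (cl_mult d x y) = cl_mult d (cl_inv d y) (cl_inv d x)"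
proof (rule cl_inv_eq)
  note xi = cl_inv_Pin[OF x] and yi = cl_inv_Pin[OF y]
  show "cl_mult d x y \<in> Pin d" by (rule Pin_mult_closed[OF x y])
  show "cl_mult d (cl_inv d y) (cl_inv d x) \<in> cl_carrier d" by simp
  have "cl_mult d (cl_mult d x y) (cl_mult d (cl_inv d y) (cl_inv d x))
     = cl_mult d x (cl_mult d (cl_mult d y (cl_inv d y)) (cl_inv d x))"
    by (simp only: cl_assoc)
  also have "\<dots> = cl_one"
    using xi yi Pin_carrier[OF xi(1)] by (simp add: cl_one_left)
  finally show "cl_mult d (cl_mult d x y) (cl_mult d (cl_inv d y) (cl_inv d x)) = cl_one" .
  have "cl_mult d (cl_mult d (cl_inv d y) (cl_inv d x)) (cl_mult d x y)
     = cl_mult d (cl_inv d y) (cl_mult d (cl_mult d (cl_inv d x) x) y)"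
    by (simp only: cl_assoc)
  also have "\<dots> = cl_one"
    using xi yi Pin_carrier[OF y] by (simp add: cl_one_left)
  finally show "cl_mult d (cl_mult d (cl_inv d y) (cl_inv d x)) (cl_mult d x y) = cl_one" .
qed

lemma cl_inv_one: "cl_inv d cl_one = cl_one"
  by (rule cl_inv_eq) (auto simp: Pin.Pin_one cl_one_left)

lemma cl_inv_vec: assumes u: "unitv d u"
  shows "cl_inv d (cl_vec d u) = csc (-1) (cl_vec d u)"
  by (rule cl_inv_eq[OF Pin_vec[OF u]])
     (auto simp: cl_mult_csc_left cl_mult_csc_right cl_vec_sq[OF u])

definition Hm :: "nat \<Rightarrow> real vec \<Rightarrow> real mat" where
  "Hm d u = mat d d (\<lambda>(i, j). (if i = j then 1 else 0) - 2 * u $ i * u $ j)"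

lemma Hm_carrier[simp]: "Hm d u \<in> carrier_mat d d"
  by (simp add: Hm_def)

lemma Hm_mult_vec: assumes "u \<in> carrier_vec d" "w \<in> carrier_vec d"
  shows "Hm d u *\<^sub>v w = vec d (\<lambda>i. w $ i + (- 2 * (u \<bullet> w)) * u $ i)"
proof
  show "dim_vec (Hm d u *\<^sub>v w) = dim_vec (vec d (\<lambda>i. w $ i + - 2 * (u \<bullet> w) * u $ i))"
    by (simp add: Hm_def)
  fix i assume "i < dim_vec (vec d (\<lambda>i. w $ i + - 2 * (u \<bullet> w) * u $ i))"
  then have i: "i < d" by simp
  have "(Hm d u *\<^sub>v w) $ i = (\<Sum>j<d. ((if i = j then 1 else 0) - 2 * u $ i * u $ j) * w $ j)"
    using i assms by (simp add: Hm_def scalar_prod_def row_def atLeast0LessThan)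
  also have "\<dots> = (\<Sum>j<d. (if i = j then 1 else 0) * w $ j) - (\<Sum>j<d. 2 * u $ i * u $ j * w $ j)"
    by (simp add: left_diff_distrib sum_subtractf)
  finally have e1: "(Hm d u *\<^sub>v w) $ i = (\<Sum>j<d. (if i = j then 1 else 0) * w $ j) - (\<Sum>j<d. 2 * u $ i * u $ j * w $ j)" .
  have "(\<Sum>j<d. (if i = j then 1 else 0) * w $ j) = (\<Sum>j<d. if j = i then w $ j else 0)"
    by (rule sum.cong) auto
  also have "\<dots> = w $ i" using i by (subst sum.delta) auto
  finally have e2: "(\<Sum>j<d. (if i = j then 1 else 0) * w $ j) = w $ i" .
  have e3: "(\<Sum>j<d. 2 * u $ i * u $ j * w $ j) = 2 * u $ i * (u \<bullet> w)"
    using assms by (simp add: sum_distrib_left mult_ac scalar_prod_def atLeast0LessThan)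
  show "(Hm d u *\<^sub>v w) $ i = vec d (\<lambda>i. w $ i + - 2 * (u \<bullet> w) * u $ i) $ i"
    using i unfolding e1 e2 e3 by simp
qed

definition twisted :: "nat \<Rightarrow> cl \<Rightarrow> real mat \<Rightarrow> bool" where
  "twisted d x R \<longleftrightarrow> R \<in> carrier_mat d d \<and>
     (\<forall>w\<in>carrier_vec d. cl_mult d (cl_mult d (cl_alpha x) (cl_vec d w)) (cl_inv d x) = cl_vec d (R *\<^sub>v w))"

lemma twisted_exists: "x \<in> Pin d \<Longrightarrow> \<exists>R. twisted d x R"
proof (induction rule: Pin.induct)
  case Pin_one
  show ?case
    by (rule exI[of _ "1\<^sub>m d"]) (auto simp: twisted_def cl_inv_one cl_one_left cl_one_right)
next
  case (Pin_mult v x)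
  have u: "unitv d v" using Pin_mult by (simp add: unitv_def)
  obtain R where R: "twisted d x R" using Pin_mult by blast
  show ?case
  proof (rule exI[of _ "Hm d v * R"], unfold twisted_def, intro conjI ballI)
    show "Hm d v * R \<in> carrier_mat d d" using R by (auto simp: twisted_def intro!: mult_carrier_mat)
    fix w :: "real vec" assume w: "w \<in> carrier_vec d"
    have Rw: "R *\<^sub>v w \<in> carrier_vec d" using R w by (auto simp: twisted_def)
    have "cl_mult d (cl_mult d (cl_alpha (cl_mult d (cl_vec d v) x)) (cl_vec d w)) (cl_inv d (cl_mult d (cl_vec d v) x))
       = cl_mult d (cl_mult d (cl_vec d v) (cl_mult d (cl_mult d (cl_alpha x) (cl_vec d w)) (cl_inv d x))) (cl_vec d v)"
      unfolding cl_inv_mult[OF Pin_vec[OF u] Pin_mult(3)] cl_alpha_mult cl_alpha_vec cl_inv_vec[OF u]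
      by (simp add: cl_assoc cl_mult_csc_left cl_mult_csc_right)
    also have "\<dots> = cl_vec d (vec d (\<lambda>i. (R *\<^sub>v w) $ i + (- 2 * (v \<bullet> (R *\<^sub>v w))) * v $ i))"
      using R w by (simp add: twisted_def cl_uwu[OF u Rw])
    also have "\<dots> = cl_vec d ((Hm d v * R) *\<^sub>v w)"
    proof -
      have Rc: "R \<in> carrier_mat d d" using R by (simp add: twisted_def)
      have "(Hm d v * R) *\<^sub>v w = Hm d v *\<^sub>v (R *\<^sub>v w)"
        using Rc w by (simp add: assoc_mult_mat_vec[of _ d d])
      also have "\<dots> = vec d (\<lambda>i. (R *\<^sub>v w) $ i + (- 2 * (v \<bullet> (R *\<^sub>v w))) * v $ i)"
        by (rule Hm_mult_vec) (use u Rw in \<open>auto simp: unitv_def\<close>)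
      finally show ?thesis by simp
    qed
    finally show "cl_mult d (cl_mult d (cl_alpha (cl_mult d (cl_vec d v) x)) (cl_vec d w)) (cl_inv d (cl_mult d (cl_vec d v) x))
       = cl_vec d ((Hm d v * R) *\<^sub>v w)" .
  qed
qed

lemma twisted_pin_rho: assumes "twisted d x R" shows "pin_rho d x = R"
proof
  show "dim_row (pin_rho d x) = dim_row R" "dim_col (pin_rho d x) = dim_col R"
    using assms by (auto simp: pin_rho_def twisted_def)
  fix i j assume "i < dim_row R" "j < dim_col R"
  then have ij: "i < d" "j < d" using assms by (auto simp: twisted_def)
  have "pin_rho d x $$ (i, j) = cl_vec d (R *\<^sub>v unit_vec d j) {i}"
    using assms ij by (simp add: pin_rho_def twisted_def)
  also have "\<dots> = R $$ (i, j)"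
  proof -
    have Rc: "R \<in> carrier_mat d d" using assms by (simp add: twisted_def)
    then show ?thesis using ij by (simp add: cl_vec_single carrier_matD)
  qed
  finally show "pin_rho d x $$ (i, j) = R $$ (i, j)" .
qed

lemma pin_rho_twisted: assumes "x \<in> Pin d" shows "twisted d x (pin_rho d x)"
proof -
  obtain R where "twisted d x R" using twisted_exists[OF assms] by blast
  moreover then have "pin_rho d x = R" by (rule twisted_pin_rho)
  ultimately show ?thesis by simp
qed

lemma pin_rho_carrier: "x \<in> Pin d \<Longrightarrow> pin_rho d x \<in> carrier_mat d d"
  using pin_rho_twisted twisted_def by blast

lemma pin_rho_action: "x \<in> Pin d \<Longrightarrow> w \<in> carrier_vec d \<Longrightarrow>
   cl_mult d (cl_mult d (cl_alpha x) (cl_vec d w)) (cl_inv d x) = cl_vec d (pin_rho d x *\<^sub>v w)"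
  using pin_rho_twisted twisted_def by blast

lemma pin_rho_mult: assumes x: "x \<in> Pin d" and y: "y \<in> Pin d"
  shows "pin_rho d (cl_mult d x y) = pin_rho d x * pin_rho d y"
proof (rule twisted_pin_rho, unfold twisted_def, intro conjI ballI)
  show "pin_rho d x * pin_rho d y \<in> carrier_mat d d"
    using pin_rho_carrier[OF x] pin_rho_carrier[OF y] by auto
  fix w :: "real vec" assume w: "w \<in> carrier_vec d"
  have yw: "pin_rho d y *\<^sub>v w \<in> carrier_vec d" using pin_rho_carrier[OF y] w by auto
  have "cl_mult d (cl_mult d (cl_alpha (cl_mult d x y)) (cl_vec d w)) (cl_inv d (cl_mult d x y))
     = cl_mult d (cl_mult d (cl_alpha x) (cl_mult d (cl_mult d (cl_alpha y) (cl_vec d w)) (cl_inv d y))) (cl_inv d x)"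
    unfolding cl_inv_mult[OF x y] cl_alpha_mult by (simp only: cl_assoc)
  also have "\<dots> = cl_mult d (cl_mult d (cl_alpha x) (cl_vec d (pin_rho d y *\<^sub>v w))) (cl_inv d x)"
    by (simp only: pin_rho_action[OF y w])
  also have "\<dots> = cl_vec d (pin_rho d x *\<^sub>v (pin_rho d y *\<^sub>v w))"
    by (rule pin_rho_action[OF x yw])
  also have "\<dots> = cl_vec d ((pin_rho d x * pin_rho d y) *\<^sub>v w)"
    using pin_rho_carrier[OF x] pin_rho_carrier[OF y] w
    by (simp add: assoc_mult_mat_vec[of _ d d])
  finally show "cl_mult d (cl_mult d (cl_alpha (cl_mult d x y)) (cl_vec d w)) (cl_inv d (cl_mult d x y))
     = cl_vec d ((pin_rho d x * pin_rho d y) *\<^sub>v w)" .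
qed

lemma pin_rho_one: "pin_rho d cl_one = 1\<^sub>m d"
  by (rule twisted_pin_rho) (auto simp: twisted_def cl_inv_one cl_one_left cl_one_right)

lemma pin_rho_vec: assumes u: "unitv d u" shows "pin_rho d (cl_vec d u) = Hm d u"
proof -
  have "cl_vec d u = cl_mult d (cl_vec d u) cl_one" by (simp add: cl_one_right)
  then have "pin_rho d (cl_vec d u) = pin_rho d (cl_vec d u) * pin_rho d cl_one"
    using pin_rho_mult[OF Pin_vec[OF u] Pin.Pin_one] by simp
  show ?thesis
  proof (rule twisted_pin_rho, unfold twisted_def, intro conjI ballI)
    show "Hm d u \<in> carrier_mat d d" by simp
    fix w :: "real vec" assume w: "w \<in> carrier_vec d"
    have "cl_mult d (cl_mult d (cl_alpha (cl_vec d u)) (cl_vec d w)) (cl_inv d (cl_vec d u))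
       = cl_mult d (cl_mult d (cl_vec d u) (cl_vec d w)) (cl_vec d u)"
      unfolding cl_alpha_vec cl_inv_vec[OF u] by (simp add: cl_mult_csc_left cl_mult_csc_right)
    also have "\<dots> = cl_vec d (Hm d u *\<^sub>v w)"
      using u w by (simp add: cl_uwu Hm_mult_vec unitv_def)
    finally show "cl_mult d (cl_mult d (cl_alpha (cl_vec d u)) (cl_vec d w)) (cl_inv d (cl_vec d u)) = cl_vec d (Hm d u *\<^sub>v w)" .
  qed
qed

lemma ej_val: "j < d \<Longrightarrow> cl_vec d (unit_vec d j) S = (if S = {j} then 1 else 0)"
  by (auto simp: cl_vec_def split: if_splits)

lemma mult_right_e: assumes j: "j < d" and C: "C \<subseteq> {0..<d}"
  shows "cl_mult d y (cl_vec d (unit_vec d j)) C = cl_sign (symd C {j}) {j} * y (symd C {j})"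
proof -
  have "cl_mult d y (cl_vec d (unit_vec d j)) C =
     (\<Sum>A\<in>Pow {0..<d}. if A = symd C {j} then cl_sign A {j} * y A else 0)"
    unfolding cl_mult_def_pt[OF C]
  proof (rule sum.cong[OF refl])
    fix A
    have "symd A C = {j} \<longleftrightarrow> A = symd C {j}" by blast
    then show "cl_sign A (symd A C) * y A * cl_vec d (unit_vec d j) (symd A C) =
       (if A = symd C {j} then cl_sign A {j} * y A else 0)"
      using j by (auto simp: ej_val)
  qed
  also have "\<dots> = cl_sign (symd C {j}) {j} * y (symd C {j})"
    using j C by (subst sum.delta) auto
  finally show ?thesis .
qed

lemma mult_left_e: assumes j: "j < d" and C: "C \<subseteq> {0..<d}"
  shows "cl_mult d (cl_vec d (unit_vec d j)) y C = cl_sign {j} (symd {j} C) * y (symd {j} C)"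
proof -
  have "cl_mult d (cl_vec d (unit_vec d j)) y C =
     (\<Sum>A\<in>Pow {0..<d}. if A = {j} then cl_sign A (symd A C) * y (symd A C) else 0)"
    unfolding cl_mult_def_pt[OF C]
    by (rule sum.cong[OF refl]) (use j in \<open>auto simp: ej_val\<close>)
  also have "\<dots> = cl_sign {j} (symd {j} C) * y (symd {j} C)"
    using j by (subst sum.delta) auto
  finally show ?thesis .
qed

lemma ic_right_single: "ic S {j} = card {a\<in>S. j < a}"
proof -
  have "{(a, b). a \<in> S \<and> b \<in> {j} \<and> b < a} = (\<lambda>a. (a, j)) ` {a\<in>S. j < a}" by auto
  then show ?thesis unfolding ic_def by (simp add: card_image inj_on_def)
qed

lemma ic_left_single: "ic {j} S = card {a\<in>S. a < j}"
proof -
  have "{(a, b). a \<in> {j} \<and> b \<in> S \<and> b < a} = (\<lambda>b. (j, b)) ` {a\<in>S. a < j}" by auto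
  then show ?thesis unfolding ic_def by (simp add: card_image inj_on_def)
qed

lemma sign_swap_single: assumes "finite S" "j \<in> S"
  shows "(-1) ^ card S * cl_sign S {j} = - cl_sign {j} S"
proof -
  let ?L = "{a\<in>S. a < j}" and ?G = "{a\<in>S. j < a}"
  have Sj: "S = insert j (?L \<union> ?G)" using assms by auto
  have fin: "finite (?L \<union> ?G)" using assms by auto
  have nj: "j \<notin> ?L \<union> ?G" by auto
  have "card (?L \<union> ?G) = card ?L + card ?G"
    by (rule card_Un_disjoint) (use assms in auto)
  then have cS: "card S = card ?L + card ?G + 1"
    using Sj card_insert_disjoint[OF fin nj] by simp
  have s1: "cl_sign S {j} = (-1) ^ (card ?G + 1)"
    using assms by (simp add: cl_sign_ic ic_right_single)
  have s2: "cl_sign {j} S = (-1) ^ (card ?L + 1)"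
    using assms by (simp add: cl_sign_ic ic_left_single)
  have "(-1::real) ^ (card S + (card ?G + 1)) = (-1) ^ (card ?L + 2)"
    by (rule minus_one_pow_parity[where X = 0 and Y = "card ?G"]) (simp add: cS)
  then show ?thesis by (simp add: s1 s2 power_add)
qed

lemma twisted_central_scalar: assumes x: "x \<in> cl_carrier d"
  and comm: "\<And>j. j < d \<Longrightarrow> cl_mult d (cl_alpha x) (cl_vec d (unit_vec d j)) = cl_mult d (cl_vec d (unit_vec d j)) x"
  shows "x = csc (x {}) cl_one"
proof
  fix S show "x S = csc (x {}) cl_one S"
  proof (cases "S \<subseteq> {0..<d}")
    case False then show ?thesis using x cl_carrierD[OF x False] by (auto simp: csc_def cl_one_def)
  next
    case True
    show ?thesis
    proof (cases "S = {}")
      case True then show ?thesis by (simp add: csc_def cl_one_def)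
    next
      case False
      then obtain j where jS: "j \<in> S" by blast
      with True have j: "j < d" by auto
      have fin: "finite S" using True finite_subset by blast
      let ?C = "symd S {j}"
      have C: "?C \<subseteq> {0..<d}" using True j by auto
      have e1: "symd ?C {j} = S" "symd {j} ?C = S" by blast+
      have "cl_mult d (cl_alpha x) (cl_vec d (unit_vec d j)) ?C = cl_mult d (cl_vec d (unit_vec d j)) x ?C"
        using comm[OF j] by simp
      then have "cl_sign S {j} * ((-1) ^ card S * x S) = cl_sign {j} S * x S"
        unfolding mult_right_e[OF j C] mult_left_e[OF j C] e1 by (simp add: cl_alpha_def)
      then have "- cl_sign {j} S * x S = cl_sign {j} S * x S"
        using sign_swap_single[OF fin jS] by (simp add: mult_ac)
      moreover have "cl_sign {j} S \<noteq> 0" by (simp add: cl_sign_def)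
      ultimately have "x S = 0" by simp
      then show ?thesis using False by (simp add: csc_def cl_one_def)
    qed
  qed
qed

definition bf :: "nat \<Rightarrow> cl \<Rightarrow> cl \<Rightarrow> real" where
  "bf d x y = (\<Sum>S\<in>Pow {0..<d}. x S * y S)"

lemma mult_left_vec: assumes C: "C \<subseteq> {0..<d}"
  shows "cl_mult d (cl_vec d u) x C = (\<Sum>i<d. u $ i * (cl_sign {i} (symd {i} C) * x (symd {i} C)))"
proof -
  have "cl_mult d (cl_vec d u) x C = (\<Sum>A\<in>Pow {0..<d}. cl_vec d u A * (cl_sign A (symd A C) * x (symd A C)))"
    unfolding cl_mult_def_pt[OF C] by (simp add: mult_ac)
  then show ?thesis by (simp add: sum_Pow_vec)
qed

lemma sign_flip_single: assumes "finite C"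
  shows "cl_sign {i} C = - cl_sign {i} (symd {i} C)"
proof -
  have L: "{a \<in> symd {i} C. a < i} = {a\<in>C. a < i}" by auto
  have I: "ic {i} (symd {i} C) = ic {i} C" unfolding ic_left_single L ..
  show ?thesis
  proof (cases "i \<in> C")
    case True
    then have a: "{i} \<inter> C = {i}" "{i} \<inter> symd {i} C = {}" by auto
    show ?thesis unfolding cl_sign_ic I unfolding a by simp
  next
    case False
    then have a: "{i} \<inter> C = {}" "{i} \<inter> symd {i} C = {i}" by auto
    show ?thesis unfolding cl_sign_ic I unfolding a by simp
  qed
qed

lemma bf_vec_skew: "bf d (cl_mult d (cl_vec d u) x) y = - bf d x (cl_mult d (cl_vec d u) y)"
proof -
  let ?P = "Pow {0..<d}"
  have "bf d (cl_mult d (cl_vec d u) x) y =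
     (\<Sum>C\<in>?P. \<Sum>i<d. u $ i * (cl_sign {i} (symd {i} C) * x (symd {i} C) * y C))"
    unfolding bf_def by (rule sum.cong[OF refl]) (auto simp: mult_left_vec sum_distrib_right sum_distrib_left mult_ac)
  also have "\<dots> = (\<Sum>i<d. \<Sum>C\<in>?P. u $ i * (cl_sign {i} (symd {i} C) * x (symd {i} C) * y C))"
    by (rule sum.swap)
  also have "\<dots> = (\<Sum>i<d. u $ i * (\<Sum>C\<in>?P. cl_sign {i} (symd {i} C) * x (symd {i} C) * y C))"
    by (simp add: sum_distrib_left)
  also have "\<dots> = (\<Sum>i<d. u $ i * (- (\<Sum>C\<in>?P. x C * (cl_sign {i} (symd {i} C) * y (symd {i} C)))))"
  proof (rule sum.cong[OF refl])
    fix i assume i: "i \<in> {..<d}"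
    have iP: "{i} \<in> ?P" using i by auto
    have "(\<Sum>C\<in>?P. x C * (cl_sign {i} (symd {i} C) * y (symd {i} C)))
       = (\<Sum>C\<in>?P. x (symd {i} C) * (cl_sign {i} (symd {i} (symd {i} C)) * y (symd {i} (symd {i} C))))"
      by (rule sum_Pow_symd_reindex[OF iP])
    also have "\<dots> = (\<Sum>C\<in>?P. - (cl_sign {i} (symd {i} C) * x (symd {i} C) * y C))"
    proof (rule sum.cong[OF refl])
      fix C assume "C \<in> ?P"
      then have "finite C" by (rule Pow_finite_mem)
      then show "x (symd {i} C) * (cl_sign {i} (symd {i} (symd {i} C)) * y (symd {i} (symd {i} C))) =
        - (cl_sign {i} (symd {i} C) * x (symd {i} C) * y C)"
        unfolding symd_symd using sign_flip_single[of C i] by (simp add: mult_ac)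
    qed
    also have "\<dots> = - (\<Sum>C\<in>?P. cl_sign {i} (symd {i} C) * x (symd {i} C) * y C)"
      by (simp add: sum_negf)
    finally show "u $ i * (\<Sum>C\<in>?P. cl_sign {i} (symd {i} C) * x (symd {i} C) * y C) =
      u $ i * (- (\<Sum>C\<in>?P. x C * (cl_sign {i} (symd {i} C) * y (symd {i} C))))" by simp
  qed
  also have "\<dots> = - (\<Sum>i<d. \<Sum>C\<in>?P. u $ i * (x C * (cl_sign {i} (symd {i} C) * y (symd {i} C))))"
    by (simp add: sum_distrib_left sum_negf)
  also have "(\<Sum>i<d. \<Sum>C\<in>?P. u $ i * (x C * (cl_sign {i} (symd {i} C) * y (symd {i} C))))
     = (\<Sum>C\<in>?P. \<Sum>i<d. u $ i * (x C * (cl_sign {i} (symd {i} C) * y (symd {i} C))))"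
    by (rule sum.swap)
  also have "\<dots> = bf d x (cl_mult d (cl_vec d u) y)"
    unfolding bf_def by (rule sum.cong[OF refl]) (auto simp: mult_left_vec sum_distrib_left mult_ac)
  finally show ?thesis .
qed

lemma bf_csc_right: "bf d x (csc c y) = c * bf d x y"
  by (simp add: bf_def csc_def sum_distrib_left mult_ac)

lemma bf_unit_vec: assumes u: "unitv d u" and x: "x \<in> cl_carrier d"
  shows "bf d (cl_mult d (cl_vec d u) x) (cl_mult d (cl_vec d u) x) = bf d x x"
proof -
  have "bf d (cl_mult d (cl_vec d u) x) (cl_mult d (cl_vec d u) x) =
      - bf d x (cl_mult d (cl_vec d u) (cl_mult d (cl_vec d u) x))"
    by (rule bf_vec_skew)
  also have "cl_mult d (cl_vec d u) (cl_mult d (cl_vec d u) x) = csc (-1) x"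
    unfolding cl_assoc[symmetric] cl_vec_sq[OF u] cl_mult_csc_left cl_one_left[OF x] ..
  finally show ?thesis by (simp add: bf_csc_right)
qed

lemma bf_Pin: "x \<in> Pin d \<Longrightarrow> bf d x x = 1"
proof (induction rule: Pin.induct)
  case Pin_one
  have "bf d cl_one cl_one = (\<Sum>S\<in>Pow {0..<d}. if S = {} then 1 else 0)"
    unfolding bf_def by (rule sum.cong) (auto simp: cl_one_def)
  also have "\<dots> = 1" by (subst sum.delta) auto
  finally show ?case .
next
  case (Pin_mult v x)
  then show ?case using bf_unit_vec[of d v x] Pin_carrier[of x d] by (simp add: unitv_def)
qed

lemma Pin_kernel: assumes x: "x \<in> Pin d" and r: "pin_rho d x = 1\<^sub>m d"
  shows "x = cl_one \<or> x = csc (-1) cl_one"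
proof -
  have xc: "x \<in> cl_carrier d" by (rule Pin_carrier[OF x])
  note xi = cl_inv_Pin[OF x]
  have comm: "cl_mult d (cl_alpha x) (cl_vec d (unit_vec d j)) = cl_mult d (cl_vec d (unit_vec d j)) x"
    if j: "j < d" for j
  proof -
    have "cl_mult d (cl_mult d (cl_alpha x) (cl_vec d (unit_vec d j))) (cl_inv d x) = cl_vec d (unit_vec d j)"
      using pin_rho_action[OF x, of "unit_vec d j"] r by simp
    then have "cl_mult d (cl_mult d (cl_mult d (cl_alpha x) (cl_vec d (unit_vec d j))) (cl_inv d x)) x
        = cl_mult d (cl_vec d (unit_vec d j)) x" by simp
    then show ?thesis using xi xc by (simp add: cl_assoc cl_one_right)
  qed
  have xs: "x = csc (x {}) cl_one" by (rule twisted_central_scalar[OF xc comm])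
  have "bf d x x = x {} * x {}"
  proof -
    have "bf d x x = (\<Sum>S\<in>Pow {0..<d}. if S = {} then x {} * x {} else 0)"
      unfolding bf_def by (rule sum.cong[OF refl]) (subst (1 2) xs, simp add: csc_def cl_one_def)
    also have "\<dots> = x {} * x {}" by (subst sum.delta) auto
    finally show ?thesis .
  qed
  with bf_Pin[OF x] have "x {} * x {} = 1" by simp
  then have "x {} = 1 \<or> x {} = -1"
    using square_eq_1_iff by blast
  then show ?thesis using xs by auto
qed

lemma Pin_rho_eq: assumes x: "x \<in> Pin d" and y: "y \<in> Pin d" and r: "pin_rho d x = pin_rho d y"
  shows "x = y \<or> x = csc (-1) y"
proof -
  note yi = cl_inv_Pin[OF y]
  let ?z = "cl_mult d x (cl_inv d y)"
  have z: "?z \<in> Pin d" by (rule Pin_mult_closed[OF x yi(1)])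
  have "pin_rho d ?z = pin_rho d (cl_mult d y (cl_inv d y))"
    using pin_rho_mult[OF x yi(1)] pin_rho_mult[OF y yi(1)] r by simp
  also have "\<dots> = 1\<^sub>m d" using yi pin_rho_one by simp
  finally have "?z = cl_one \<or> ?z = csc (-1) cl_one" by (rule Pin_kernel[OF z])
  moreover have "x = cl_mult d ?z y"
    using yi Pin_carrier[OF x] by (simp add: cl_assoc cl_one_right)
  ultimately show ?thesis using Pin_carrier[OF y] by (auto simp: cl_one_left cl_mult_csc_left)
qed

fun prodl :: "nat \<Rightarrow> (nat \<Rightarrow> cl) \<Rightarrow> nat list \<Rightarrow> cl" where
  "prodl d f [] = cl_one"
| "prodl d f (k # ks) = cl_mult d (f k) (prodl d f ks)"

lemma prodl_carrier[simp]: "prodl d f ks \<in> cl_carrier d"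
  by (cases ks) auto

lemma prodl_Pin: "(\<forall>k\<in>set ks. unitv d (P k)) \<Longrightarrow> prodl d (\<lambda>k. cl_vec d (P k)) ks \<in> Pin d"
  by (induction ks) (auto simp: unitv_def intro: Pin.intros)

lemma prodl_comm_e:
  assumes anti: "\<forall>a b. a \<noteq> b \<longrightarrow> cl_mult d (f a) (f b) = csc (-1) (cl_mult d (f b) (f a))"
    and fc: "\<forall>a. f a \<in> cl_carrier d"
    and dist: "distinct ks"
  shows "cl_mult d (prodl d f ks) (f j) =
     csc ((-1) ^ (length ks + (if j \<in> set ks then 1 else 0))) (cl_mult d (f j) (prodl d f ks))"
  using dist
proof (induction ks)
  case Nil
  then show ?case using fc by (simp add: cl_one_left cl_one_right)
next
  case (Cons k ks)
  then have jk: "k \<notin> set ks" and IH: "cl_mult d (prodl d f ks) (f j) =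
     csc ((-1) ^ (length ks + (if j \<in> set ks then 1 else 0))) (cl_mult d (f j) (prodl d f ks))" by auto
  show ?case
  proof (cases "k = j")
    case True
    have "cl_mult d (prodl d f (k # ks)) (f j) = cl_mult d (f k) (cl_mult d (prodl d f ks) (f j))"
      by (simp add: cl_assoc)
    also have "\<dots> = csc ((-1) ^ length ks) (cl_mult d (f j) (cl_mult d (f j) (prodl d f ks)))"
      unfolding IH using jk True by (simp add: cl_mult_csc_right)
    also have "\<dots> = csc ((-1) ^ (length (k # ks) + (if j \<in> set (k # ks) then 1 else 0))) (cl_mult d (f j) (prodl d f (k # ks)))"
      using True by simp
    finally show ?thesis .
  next
    case False
    have "cl_mult d (prodl d f (k # ks)) (f j) = cl_mult d (f k) (cl_mult d (prodl d f ks) (f j))"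
      by (simp add: cl_assoc)
    also have "\<dots> = csc ((-1) ^ (length ks + (if j \<in> set ks then 1 else 0))) (cl_mult d (cl_mult d (f k) (f j)) (prodl d f ks))"
      unfolding IH by (simp add: cl_mult_csc_right cl_assoc)
    also have "\<dots> = csc ((-1) ^ (length ks + (if j \<in> set ks then 1 else 0)) * (-1)) (cl_mult d (f j) (prodl d f (k # ks)))"
      unfolding anti[rule_format, OF False] by (simp add: cl_mult_csc_left cl_assoc)
    also have "(-1::real) ^ (length ks + (if j \<in> set ks then 1 else 0)) * (-1) =
       (-1) ^ (length (k # ks) + (if j \<in> set (k # ks) then 1 else 0))"
      using False by simp
    finally show ?thesis .
  qed
qed

lemma prodl_comm:
  assumes anti: "\<forall>a b. a \<noteq> b \<longrightarrow> cl_mult d (f a) (f b) = csc (-1) (cl_mult d (f b) (f a))"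
    and fc: "\<forall>a. f a \<in> cl_carrier d"
    and dk: "distinct ks" and dl: "distinct ls"
  shows "cl_mult d (prodl d f ks) (prodl d f ls) =
     csc ((-1) ^ (length ks * length ls + card (set ks \<inter> set ls))) (cl_mult d (prodl d f ls) (prodl d f ks))"
  using dl
proof (induction ls)
  case Nil
  then show ?case by (simp add: cl_one_left cl_one_right)
next
  case (Cons j ls)
  then have jl: "j \<notin> set ls" and IH: "cl_mult d (prodl d f ks) (prodl d f ls) =
     csc ((-1) ^ (length ks * length ls + card (set ks \<inter> set ls))) (cl_mult d (prodl d f ls) (prodl d f ks))" by auto
  have "cl_mult d (prodl d f ks) (prodl d f (j # ls)) = cl_mult d (cl_mult d (prodl d f ks) (f j)) (prodl d f ls)"
    by (simp add: cl_assoc)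
  also have "\<dots> = cl_mult d (csc ((-1) ^ (length ks + (if j \<in> set ks then 1 else 0)))
       (cl_mult d (f j) (prodl d f ks))) (prodl d f ls)"
    using prodl_comm_e[OF anti fc dk, of j] by (simp only:)
  also have "\<dots> = csc ((-1) ^ (length ks + (if j \<in> set ks then 1 else 0)))
       (cl_mult d (f j) (cl_mult d (prodl d f ks) (prodl d f ls)))"
    by (simp only: cl_mult_csc_left cl_assoc)
  also have "\<dots> = csc ((-1) ^ (length ks + (if j \<in> set ks then 1 else 0)) *
        (-1) ^ (length ks * length ls + card (set ks \<inter> set ls)))
       (cl_mult d (prodl d f (j # ls)) (prodl d f ks))"
    unfolding IH by (simp add: cl_mult_csc_right cl_assoc)
  also have "(-1::real) ^ (length ks + (if j \<in> set ks then 1 else 0)) *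
        (-1) ^ (length ks * length ls + card (set ks \<inter> set ls)) =
      (-1) ^ (length ks * length (j # ls) + card (set ks \<inter> set (j # ls)))"
  proof -
    have "card (set ks \<inter> set (j # ls)) = card (set ks \<inter> set ls) + (if j \<in> set ks then 1 else 0)"
    proof (cases "j \<in> set ks")
      case True
      then have "set ks \<inter> set (j # ls) = insert j (set ks \<inter> set ls)" by auto
      then show ?thesis using jl True by simp
    next
      case False
      then have "set ks \<inter> set (j # ls) = set ks \<inter> set ls" by auto
      then show ?thesis using False by simp
    qed
    then show ?thesis by (simp add: power_add[symmetric] algebra_simps)
  qed
  finally show ?case .
qed

definition onorm :: "nat \<Rightarrow> (nat \<Rightarrow> real vec) \<Rightarrow> nat set \<Rightarrow> bool" where
  "onorm d P K \<longleftrightarrow> (\<forall>k\<in>K. P k \<in> carrier_vec d) \<and> (\<forall>a\<in>K. \<forall>b\<in>K. P a \<bullet> P b = (if a = b then 1 else 0))"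

lemma sum_delta_left: "i < (d::nat) \<Longrightarrow> (\<Sum>l<d. (if i = l then 1 else 0) * (f l :: real)) = f i"
proof -
  assume i: "i < d"
  have "(\<Sum>l<d. (if i = l then 1 else 0) * f l) = (\<Sum>l<d. if l = i then f l else 0)"
    by (rule sum.cong) auto
  also have "\<dots> = f i" using i by (subst sum.delta) auto
  finally show ?thesis .
qed

lemma prodl_rho:
  assumes "onorm d P (set ks)" "distinct ks"
  shows "pin_rho d (prodl d (\<lambda>k. cl_vec d (P k)) ks) =
     mat d d (\<lambda>(i, j). (if i = j then 1 else 0) - 2 * (\<Sum>k\<in>set ks. P k $ i * P k $ j))"
  using assms
proof (induction ks)
  case Nil
  then show ?case by (auto simp: pin_rho_one)
next
  case (Cons k ks)
  have on: "onorm d P (set ks)" using Cons.prems by (auto simp: onorm_def)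
  have IH: "pin_rho d (prodl d (\<lambda>k. cl_vec d (P k)) ks) =
     mat d d (\<lambda>(i, j). (if i = j then 1 else 0) - 2 * (\<Sum>k\<in>set ks. P k $ i * P k $ j))"
    using Cons on by auto
  have uk: "unitv d (P k)" using Cons.prems by (simp add: onorm_def unitv_def)
  have Pks: "prodl d (\<lambda>k. cl_vec d (P k)) ks \<in> Pin d"
    by (rule prodl_Pin) (use Cons.prems in \<open>auto simp: onorm_def unitv_def\<close>)
  have kn: "k \<notin> set ks" using Cons.prems by simp
  have Pk: "P k \<in> carrier_vec d" using uk by (simp add: unitv_def)
  have orth: "(\<Sum>l<d. P k $ l * P k' $ l) = 0" if "k' \<in> set ks" for k'
  proof -
    have "P k \<bullet> P k' = 0" using Cons.prems that kn by (auto simp: onorm_def)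
    moreover have "P k' \<in> carrier_vec d" using Cons.prems that by (auto simp: onorm_def)
    ultimately show ?thesis by (simp add: scalar_prod_def atLeast0LessThan)
  qed
  let ?S = "\<lambda>l j. \<Sum>k\<in>set ks. P k $ l * P k $ j"
  have "pin_rho d (prodl d (\<lambda>k. cl_vec d (P k)) (k # ks)) =
     Hm d (P k) * mat d d (\<lambda>(i, j). (if i = j then 1 else 0) - 2 * ?S i j)"
    using pin_rho_mult[OF Pin_vec[OF uk] Pks] pin_rho_vec[OF uk] IH by simp
  also have "\<dots> = mat d d (\<lambda>(i, j). (if i = j then 1 else 0) - 2 * (\<Sum>k\<in>set (k # ks). P k $ i * P k $ j))"
  proof (rule eq_matI)
    fix i j assume "i < dim_row (mat d d (\<lambda>(i, j). (if i = j then 1 else 0) - 2 * (\<Sum>k\<in>set (k # ks). P k $ i * P k $ j)))"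
      "j < dim_col (mat d d (\<lambda>(i, j). (if i = j then 1 else 0) - 2 * (\<Sum>k\<in>set (k # ks). P k $ i * P k $ j)))"
    then have i: "i < d" and j: "j < d" by auto
    have "(Hm d (P k) * mat d d (\<lambda>(i, j). (if i = j then 1 else 0) - 2 * ?S i j)) $$ (i, j)
       = (\<Sum>l<d. ((if i = l then 1 else 0) - 2 * P k $ i * P k $ l) * ((if l = j then 1 else 0) - 2 * ?S l j))"
      using i j by (simp add: Hm_def scalar_prod_def atLeast0LessThan)
    also have "\<dots> = (\<Sum>l<d. (if i = l then 1 else 0) * ((if l = j then 1 else 0) - 2 * ?S l j))
        - 2 * P k $ i * (\<Sum>l<d. P k $ l * (if l = j then 1 else 0))
        + 4 * P k $ i * (\<Sum>l<d. P k $ l * ?S l j)"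
      by (simp add: algebra_simps sum.distrib sum_subtractf sum_distrib_left)
    also have "(\<Sum>l<d. (if i = l then 1 else 0) * ((if l = j then 1 else 0) - 2 * ?S l j)) = (if i = j then 1 else 0) - 2 * ?S i j"
      by (rule sum_delta_left[OF i])
    also have "(\<Sum>l<d. P k $ l * (if l = j then 1 else 0)) = P k $ j"
      using sum_delta_left[OF j, of "\<lambda>l. P k $ l"] by (simp add: mult.commute eq_commute)
    also have "(\<Sum>l<d. P k $ l * ?S l j) = 0"
    proof -
      have "(\<Sum>l<d. P k $ l * ?S l j) = (\<Sum>k'\<in>set ks. (\<Sum>l<d. P k $ l * P k' $ l) * P k' $ j)"
        by (simp add: sum_distrib_left sum_distrib_right mult_ac) (rule sum.swap)
      also have "\<dots> = 0" using orth by simp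
      finally show ?thesis .
    qed
    also have "(if i = j then 1 else 0) - 2 * ?S i j - 2 * P k $ i * P k $ j + 4 * P k $ i * 0 =
        (if i = j then 1 else 0) - 2 * (\<Sum>k\<in>set (k # ks). P k $ i * P k $ j)"
      using kn by simp
    also have "\<dots> = mat d d (\<lambda>(i, j). (if i = j then 1 else 0) - 2 * (\<Sum>k\<in>set (k # ks). P k $ i * P k $ j)) $$ (i, j)"
      using i j by simp
    finally show "(Hm d (P k) * mat d d (\<lambda>(i, j). (if i = j then 1 else 0) - 2 * ?S i j)) $$ (i, j) =
       mat d d (\<lambda>(i, j). (if i = j then 1 else 0) - 2 * (\<Sum>k\<in>set (k # ks). P k $ i * P k $ j)) $$ (i, j)" .
  qed (auto simp: Hm_def)
  finally show ?case .
qed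

lemma sum_split_add: fixes m n :: nat shows "(\<Sum>a<m + n. f a) = (\<Sum>a<m. f a) + (\<Sum>a<n. f (m + a) :: real)"
  by (induction n) (auto simp: add.assoc)

lemma sum_split_mult: fixes d d' :: nat shows "(\<Sum>i<d * d'. f i) = (\<Sum>a<d. \<Sum>b<d'. f (a * d' + b) :: real)"
proof (induction d)
  case 0 then show ?case by simp
next
  case (Suc d)
  have "(\<Sum>i<Suc d * d'. f i) = (\<Sum>i<d * d' + d'. f i)" by (simp add: add.commute)
  also have "\<dots> = (\<Sum>i<d * d'. f i) + (\<Sum>b<d'. f (d * d' + b))" by (rule sum_split_add)
  finally show ?case using Suc by simp
qed

definition symf :: "nat \<Rightarrow> (nat \<Rightarrow> nat \<Rightarrow> real) \<Rightarrow> bool" where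
  "symf d e \<longleftrightarrow> (\<forall>i<d. \<forall>j<d. e i j = e j i)"

definition idemf :: "nat \<Rightarrow> (nat \<Rightarrow> nat \<Rightarrow> real) \<Rightarrow> bool" where
  "idemf d e \<longleftrightarrow> (\<forall>i<d. \<forall>j<d. (\<Sum>k<d. e i k * e k j) = e i j)"

definition decomp :: "nat \<Rightarrow> (nat \<Rightarrow> nat \<Rightarrow> real) \<Rightarrow> nat \<Rightarrow> (nat \<Rightarrow> nat \<Rightarrow> real) \<Rightarrow> bool" where
  "decomp d e m q \<longleftrightarrow> (\<forall>a<m. \<forall>b<m. (\<Sum>i<d. q a i * q b i) = (if a = b then 1 else 0)) \<and>
     (\<forall>i<d. \<forall>j<d. e i j = (\<Sum>a<m. q a i * q a j))"

lemma decomp_fix: assumes "decomp d e m q" "b < m" "i < d"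
  shows "(\<Sum>j<d. e i j * q b j) = q b i"
proof -
  have "(\<Sum>j<d. e i j * q b j) = (\<Sum>j<d. \<Sum>a<m. q a i * (q a j * q b j))"
    using assms by (auto simp: decomp_def sum_distrib_right sum_distrib_left mult_ac intro!: sum.cong)
  also have "\<dots> = (\<Sum>a<m. q a i * (\<Sum>j<d. q a j * q b j))"
    by (subst sum.swap) (simp add: sum_distrib_left)
  also have "\<dots> = (\<Sum>a<m. q a i * (if a = b then 1 else 0))"
    using assms by (auto simp: decomp_def intro!: sum.cong)
  also have "\<dots> = q b i" using assms sum_delta_left[of b m "\<lambda>a. q a i"] by (simp add: mult.commute eq_commute)
  finally show ?thesis .
qed

lemma decomp_trace: assumes "decomp d e m q"
  shows "(\<Sum>i<d. e i i) = real m"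
proof -
  have "(\<Sum>i<d. e i i) = (\<Sum>i<d. \<Sum>a<m. q a i * q a i)"
    using assms by (auto simp: decomp_def intro!: sum.cong)
  also have "\<dots> = (\<Sum>a<m. \<Sum>i<d. q a i * q a i)" by (rule sum.swap)
  also have "\<dots> = (\<Sum>a<m. 1)" using assms by (auto simp: decomp_def intro!: sum.cong)
  finally show ?thesis by simp
qed

lemma trace_squares: assumes "symf d e" "idemf d e"
  shows "(\<Sum>i<d. e i i) = (\<Sum>i<d. \<Sum>k<d. e i k * e i k)"
  using assms by (auto simp: symf_def idemf_def intro!: sum.cong)

lemma decomp_exists_aux:
  "\<forall>e. symf d e \<and> idemf d e \<and> (\<Sum>i<d. e i i) \<le> real t \<longrightarrow> (\<exists>m q. decomp d e m q)"
proof (induction t)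
  case 0
  show ?case
  proof (intro allI impI)
    fix e assume H: "symf d e \<and> idemf d e \<and> (\<Sum>i<d. e i i) \<le> real 0"
    have "(\<Sum>i<d. \<Sum>k<d. e i k * e i k) \<le> 0" using H trace_squares[of d e] by simp
    moreover have "\<forall>i\<in>{..<d}. 0 \<le> (\<Sum>k<d. e i k * e i k)" by (auto intro: sum_nonneg)
    ultimately have "\<forall>i\<in>{..<d}. (\<Sum>k<d. e i k * e i k) = 0"
      using sum_nonneg_eq_0_iff[of "{..<d}" "\<lambda>i. \<Sum>k<d. e i k * e i k"] by (simp add: order_antisym sum_nonneg)
    have "e i k = 0" if i: "i < d" and k: "k < d" for i k
    proof -
      have "(\<Sum>k<d. e i k * e i k) = 0" using \<open>\<forall>i\<in>{..<d}. (\<Sum>k<d. e i k * e i k) = 0\<close> i by simp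
      then have "\<forall>k\<in>{..<d}. e i k * e i k = 0"
        using sum_nonneg_eq_0_iff[of "{..<d}" "\<lambda>k. e i k * e i k"] by simp
      then show ?thesis using k by simp
    qed
    then have "\<forall>i<d. \<forall>k<d. e i k = 0" by blast
    then have "decomp d e 0 (\<lambda>_ _. 0)" by (simp add: decomp_def)
    then show "\<exists>m q. decomp d e m q" by blast
  qed
next
  case (Suc t)
  show ?case
  proof (intro allI impI)
    fix e assume H: "symf d e \<and> idemf d e \<and> (\<Sum>i<d. e i i) \<le> real (Suc t)"
    have sy: "\<And>i j. i < d \<Longrightarrow> j < d \<Longrightarrow> e i j = e j i" using H by (simp add: symf_def)
    have id: "\<And>i j. i < d \<Longrightarrow> j < d \<Longrightarrow> (\<Sum>k<d. e i k * e k j) = e i j" using H by (simp add: idemf_def)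
    show "\<exists>m q. decomp d e m q"
    proof (cases "\<forall>i<d. \<forall>k<d. e i k = 0")
      case True
      then have "decomp d e 0 (\<lambda>_ _. 0)" by (simp add: decomp_def)
      then show ?thesis by blast
    next
      case False
      then obtain i0 k0 where i0: "i0 < d" and k0: "k0 < d" and nz: "e i0 k0 \<noteq> 0" by blast
      define c where "c = e k0 k0"
      have c_sq: "c = (\<Sum>i<d. e i k0 * e i k0)"
        unfolding c_def using id[OF k0 k0] sy k0 by (auto intro!: sum.cong)
      have "0 < (\<Sum>i<d. e i k0 * e i k0)"
      proof -
        have "e i0 k0 * e i0 k0 > 0" using nz by (auto simp: zero_less_mult_iff linorder_neq_iff)
        moreover have "e i0 k0 * e i0 k0 \<le> (\<Sum>i<d. e i k0 * e i k0)"
          using i0 by (intro member_le_sum) auto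
        ultimately show ?thesis by linarith
      qed
      then have cpos: "c > 0" using c_sq by simp
      define s where "s = sqrt c"
      have spos: "s > 0" using cpos by (simp add: s_def)
      have ss: "s * s = c" using cpos by (simp add: s_def)
      define o' where "o' i = e i k0 / s" for i
      have o_norm: "(\<Sum>i<d. o' i * o' i) = 1"
      proof -
        have "(\<Sum>i<d. o' i * o' i) = (\<Sum>i<d. e i k0 * e i k0) / (s * s)"
          by (simp add: o'_def sum_divide_distrib)
        then show ?thesis using c_sq ss cpos by simp
      qed
      have o_fix: "(\<Sum>j<d. e i j * o' j) = o' i" if i: "i < d" for i
      proof -
        have "(\<Sum>j<d. e i j * o' j) = (\<Sum>j<d. e i j * e j k0) / s"
          by (simp add: o'_def sum_divide_distrib)
        then show ?thesis using id[OF i k0] by (simp add: o'_def)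
      qed
      have o_fix': "(\<Sum>k<d. o' k * e k j) = o' j" if j: "j < d" for j
      proof -
        have "(\<Sum>k<d. o' k * e k j) = (\<Sum>k<d. e j k * o' k)"
          using sy j by (auto simp: mult.commute intro!: sum.cong)
        then show ?thesis using o_fix[OF j] by simp
      qed
      define e' where "e' i j = e i j - o' i * o' j" for i j
      have sy': "symf d e'" using sy by (simp add: symf_def e'_def mult.commute)
      have id': "idemf d e'"
        unfolding idemf_def
      proof (intro allI impI)
        fix i j assume i: "i < d" and j: "j < d"
        have "(\<Sum>k<d. e' i k * e' k j) = (\<Sum>k<d. e i k * e k j) - o' i * (\<Sum>k<d. o' k * e k j)
           - (\<Sum>k<d. e i k * o' k) * o' j + o' i * o' j * (\<Sum>k<d. o' k * o' k)"
          by (simp add: e'_def algebra_simps sum.distrib sum_subtractf sum_distrib_left sum_distrib_right)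
        also have "\<dots> = e' i j"
          using id[OF i j] o_fix'[OF j] o_fix[OF i] o_norm by (simp add: e'_def)
        finally show "(\<Sum>k<d. e' i k * e' k j) = e' i j" .
      qed
      have tr': "(\<Sum>i<d. e' i i) \<le> real t"
      proof -
        have "(\<Sum>i<d. e' i i) = (\<Sum>i<d. e i i) - 1"
          using o_norm by (simp add: e'_def sum_subtractf)
        then show ?thesis using H by simp
      qed
      obtain m q where dq: "decomp d e' m q" using Suc.IH sy' id' tr' by blast
      have e'o: "(\<Sum>j<d. e' i j * o' j) = 0" if i: "i < d" for i
      proof -
        have "(\<Sum>j<d. e' i j * o' j) = (\<Sum>j<d. e i j * o' j) - o' i * (\<Sum>j<d. o' j * o' j)"
          by (simp add: e'_def algebra_simps sum_subtractf sum_distrib_left)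
        then show ?thesis using o_fix[OF i] o_norm by simp
      qed
      have orth: "(\<Sum>i<d. o' i * q b i) = 0" if b: "b < m" for b
      proof -
        have "(\<Sum>i<d. o' i * q b i) = (\<Sum>i<d. o' i * (\<Sum>j<d. e' i j * q b j))"
          using decomp_fix[OF dq b] by simp
        also have "\<dots> = (\<Sum>j<d. (\<Sum>i<d. e' j i * o' i) * q b j)"
        proof -
          have "(\<Sum>i<d. o' i * (\<Sum>j<d. e' i j * q b j)) = (\<Sum>i<d. \<Sum>j<d. e' j i * o' i * q b j)"
            using sy' by (auto simp: symf_def sum_distrib_left mult_ac intro!: sum.cong)
          also have "\<dots> = (\<Sum>j<d. \<Sum>i<d. e' j i * o' i * q b j)" by (rule sum.swap)
          also have "\<dots> = (\<Sum>j<d. (\<Sum>i<d. e' j i * o' i) * q b j)" by (simp add: sum_distrib_right)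
          finally show ?thesis .
        qed
        also have "\<dots> = 0" using e'o by simp
        finally show ?thesis .
      qed
      define q2 where "q2 a = (if a = m then o' else q a)" for a
      have "decomp d e (Suc m) q2"
        unfolding decomp_def
      proof (intro conjI allI impI)
        fix a b assume a: "a < Suc m" and b: "b < Suc m"
        show "(\<Sum>i<d. q2 a i * q2 b i) = (if a = b then 1 else 0)"
        proof (cases "a = m"; cases "b = m")
          assume "a = m" "b = m" then show ?thesis using o_norm by (simp add: q2_def)
        next
          assume "a = m" "b \<noteq> m" then show ?thesis using orth[of b] b by (simp add: q2_def)
        next
          assume "a \<noteq> m" "b = m" then show ?thesis using orth[of a] a by (simp add: q2_def mult.commute)
        next
          assume "a \<noteq> m" "b \<noteq> m" then show ?thesis using dq a b by (simp add: q2_def decomp_def)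
        qed
      next
        fix i j assume i: "i < d" and j: "j < d"
        have "e i j = e' i j + o' i * o' j" by (simp add: e'_def)
        also have "\<dots> = (\<Sum>a<m. q a i * q a j) + o' i * o' j" using dq i j by (simp add: decomp_def)
        also have "\<dots> = (\<Sum>a<Suc m. q2 a i * q2 a j)" by (simp add: q2_def)
        finally show "e i j = (\<Sum>a<Suc m. q2 a i * q2 a j)" .
      qed
      then show ?thesis by blast
    qed
  qed
qed

lemma decomp_exists: assumes "symf d e" "idemf d e" shows "\<exists>m q. decomp d e m q"
proof -
  obtain t :: nat where "(\<Sum>i<d. e i i) \<le> real t" using real_arch_simple by blast
  then show ?thesis using decomp_exists_aux[of d t] assms by blast
qed

lemma sum_delta_right: "j < (d::nat) \<Longrightarrow> (\<Sum>k<d. (f k :: real) * (if k = j then 1 else 0)) = f j"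
  using sum_delta_left[of j d f] by (simp add: mult.commute eq_commute)

lemma mat_mult_entry: assumes "A \<in> carrier_mat d d" "B \<in> carrier_mat d d" "i < d" "j < d"
  shows "(A * B) $$ (i, j) = (\<Sum>k<d. A $$ (i, k) * B $$ (k, j))"
  using assms by (simp add: scalar_prod_def atLeast0LessThan)

lemma orth_sym: fixes M :: "real mat" assumes M: "M \<in> carrier_mat d d" and orth: "transpose_mat M * M = 1\<^sub>m d"
  and inv: "M * M = 1\<^sub>m d" and i: "i < d" and j: "j < d"
  shows "M $$ (i, j) = M $$ (j, i)"
proof -
  have Mt: "transpose_mat M \<in> carrier_mat d d" using M by simp
  have dM: "dim_row M = d" using M by auto
  have "transpose_mat M * 1\<^sub>m d = transpose_mat M" by (rule right_mult_one_mat') (simp add: dM)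
  then have "transpose_mat M = transpose_mat M * (M * M)" using inv by simp
  also have "\<dots> = (transpose_mat M * M) * M" using M by (simp add: assoc_mult_mat[of _ d d _ d _ d])
  also have "\<dots> = M" using orth M by simp
  finally have "transpose_mat M = M" .
  then have "transpose_mat M $$ (j, i) = M $$ (j, i)" by simp
  then show ?thesis using M i j by simp
qed

lemma sum_prod_diff: "(\<Sum>k<d. (a k - b k) * (c k - e k)) =
   (\<Sum>k<d. a k * c k) - (\<Sum>k<d. a k * e k) - (\<Sum>k<d. b k * c k) + (\<Sum>k<d. b k * e k :: real)"
  by (simp add: algebra_simps sum.distrib sum_subtractf)

lemma sum_prod_sum: "(\<Sum>k<d. (a k + b k) * (c k + e k)) =
   (\<Sum>k<d. a k * c k) + (\<Sum>k<d. a k * e k) + (\<Sum>k<d. b k * c k) + (\<Sum>k<d. b k * e k :: real)"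
  by (simp add: algebra_simps sum.distrib)

lemma sym_inv_decomp: fixes M :: "real mat"
  assumes M: "M \<in> carrier_mat d d" and orth: "transpose_mat M * M = 1\<^sub>m d" and inv: "M * M = 1\<^sub>m d"
  shows "\<exists>Q g. g \<le> d \<and> real d - 2 * real g = (\<Sum>i<d. M $$ (i, i)) \<and>
     (\<forall>a<d. \<forall>b<d. (\<Sum>i<d. Q a i * Q b i) = (if a = b then 1 else 0)) \<and>
     (\<forall>i<d. \<forall>j<d. (\<Sum>a<d. Q a i * Q a j) = (if i = j then 1 else 0)) \<and>
     (\<forall>i<d. \<forall>j<d. M $$ (i, j) = (if i = j then 1 else 0) - 2 * (\<Sum>a<g. Q a i * Q a j))"
proof -
  have msym: "\<And>i j. i < d \<Longrightarrow> j < d \<Longrightarrow> M $$ (i, j) = M $$ (j, i)"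
    using orth_sym[OF M orth inv] by blast
  have minv: "\<And>i j. i < d \<Longrightarrow> j < d \<Longrightarrow> (\<Sum>k<d. M $$ (i, k) * M $$ (k, j)) = (if i = j then 1 else 0)"
  proof -
    fix i j assume i: "i < d" and j: "j < d"
    have "(M * M) $$ (i, j) = (\<Sum>k<d. M $$ (i, k) * M $$ (k, j))" by (rule mat_mult_entry[OF M M i j])
    then show "(\<Sum>k<d. M $$ (i, k) * M $$ (k, j)) = (if i = j then 1 else 0)" using inv i j by simp
  qed
  define dl :: "nat \<Rightarrow> nat \<Rightarrow> real" where "dl i j = (if i = j then 1 else 0)" for i j
  define em where "em i j = (dl i j - M $$ (i, j)) / 2" for i j
  define ep where "ep i j = (dl i j + M $$ (i, j)) / 2" for i j
  have dl1: "(\<Sum>k<d. dl i k * f k) = f i" if "i < d" for i and f :: "nat \<Rightarrow> real"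
    using sum_delta_left[OF that, of f] by (simp add: dl_def)
  have dl2: "(\<Sum>k<d. f k * dl k j) = f j" if "j < d" for j and f :: "nat \<Rightarrow> real"
    using sum_delta_right[OF that, of f] by (simp add: dl_def)
  have sym_m: "symf d em" and sym_p: "symf d ep"
    using msym by (auto simp: symf_def em_def ep_def dl_def)
  have idem_m: "idemf d em"
    unfolding idemf_def
  proof (intro allI impI)
    fix i j assume i: "i < d" and j: "j < d"
    have "(\<Sum>k<d. em i k * em k j) = (\<Sum>k<d. (dl i k - M $$ (i, k)) * (dl k j - M $$ (k, j))) / 4"
      by (simp add: em_def sum_divide_distrib)
    also have "\<dots> = (dl i j - M $$ (i, j) - M $$ (i, j) + dl i j) / 4"
      unfolding sum_prod_diff using dl1[OF i] dl2[OF j] minv[OF i j] by (simp add: dl_def)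
    also have "\<dots> = em i j" by (simp add: em_def)
    finally show "(\<Sum>k<d. em i k * em k j) = em i j" .
  qed
  have idem_p: "idemf d ep"
    unfolding idemf_def
  proof (intro allI impI)
    fix i j assume i: "i < d" and j: "j < d"
    have "(\<Sum>k<d. ep i k * ep k j) = (\<Sum>k<d. (dl i k + M $$ (i, k)) * (dl k j + M $$ (k, j))) / 4"
      by (simp add: ep_def sum_divide_distrib)
    also have "\<dots> = (dl i j + M $$ (i, j) + M $$ (i, j) + dl i j) / 4"
      unfolding sum_prod_sum using dl1[OF i] dl2[OF j] minv[OF i j] by (simp add: dl_def)
    also have "\<dots> = ep i j" by (simp add: ep_def)
    finally show "(\<Sum>k<d. ep i k * ep k j) = ep i j" .
  qed
  obtain gm qm where dm: "decomp d em gm qm" using decomp_exists[OF sym_m idem_m] by blast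
  obtain gp qp where dp: "decomp d ep gp qp" using decomp_exists[OF sym_p idem_p] by blast
  have trm: "(\<Sum>i<d. em i i) = real gm" by (rule decomp_trace[OF dm])
  have trp: "(\<Sum>i<d. ep i i) = real gp" by (rule decomp_trace[OF dp])
  have "(\<Sum>i<d. em i i) = (real d - (\<Sum>i<d. M $$ (i, i))) / 2"
    by (simp add: em_def dl_def sum_divide_distrib[symmetric] sum_subtractf)
  then have g1: "real d - 2 * real gm = (\<Sum>i<d. M $$ (i, i))" using trm by simp
  have "(\<Sum>i<d. ep i i) = (real d + (\<Sum>i<d. M $$ (i, i))) / 2"
    by (simp add: ep_def dl_def sum_divide_distrib[symmetric] sum.distrib)
  then have "real gp = (real d + (\<Sum>i<d. M $$ (i, i))) / 2" using trp by simp
  then have "real (gm + gp) = real d" using g1 by simp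
  then have gsum: "gm + gp = d" by (simp only: of_nat_eq_iff)
  have cross: "(\<Sum>i<d. qm a i * qp b i) = 0" if a: "a < gm" and b: "b < gp" for a b
  proof -
    have z: "(\<Sum>i<d. ep j i * qm a i) = 0" if j: "j < d" for j
    proof -
      have "(\<Sum>i<d. ep j i * qm a i) = (\<Sum>i<d. dl j i * qm a i - em j i * qm a i)"
        by (rule sum.cong) (auto simp: ep_def em_def field_simps)
      also have "\<dots> = (\<Sum>i<d. dl j i * qm a i) - (\<Sum>i<d. em j i * qm a i)"
        by (simp add: sum_subtractf)
      finally have "(\<Sum>i<d. ep j i * qm a i) = (\<Sum>i<d. dl j i * qm a i) - (\<Sum>i<d. em j i * qm a i)" .
      then show ?thesis using dl1[OF j] decomp_fix[OF dm a j] by simp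
    qed
    have "(\<Sum>i<d. qm a i * qp b i) = (\<Sum>i<d. qm a i * (\<Sum>j<d. ep i j * qp b j))"
      using decomp_fix[OF dp b] by simp
    also have "\<dots> = (\<Sum>i<d. \<Sum>j<d. ep j i * qm a i * qp b j)"
      using sym_p by (auto simp: symf_def sum_distrib_left mult_ac intro!: sum.cong)
    also have "\<dots> = (\<Sum>j<d. \<Sum>i<d. ep j i * qm a i * qp b j)" by (rule sum.swap)
    also have "\<dots> = (\<Sum>j<d. (\<Sum>i<d. ep j i * qm a i) * qp b j)" by (simp add: sum_distrib_right)
    also have "\<dots> = 0" using z by simp
    finally show ?thesis .
  qed
  define Q where "Q a = (if a < gm then qm a else qp (a - gm))" for a
  have on: "\<forall>a<d. \<forall>b<d. (\<Sum>i<d. Q a i * Q b i) = (if a = b then 1 else 0)"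
  proof (intro allI impI)
    fix a b assume a: "a < d" and b: "b < d"
    show "(\<Sum>i<d. Q a i * Q b i) = (if a = b then 1 else 0)"
    proof (cases "a < gm"; cases "b < gm")
      assume "a < gm" "b < gm" then show ?thesis using dm by (simp add: Q_def decomp_def)
    next
      assume "a < gm" "\<not> b < gm" then show ?thesis using cross[of a "b - gm"] b gsum by (simp add: Q_def)
    next
      assume "\<not> a < gm" "b < gm" then show ?thesis using cross[of b "a - gm"] a gsum by (simp add: Q_def mult.commute)
    next
      assume na: "\<not> a < gm" and nb: "\<not> b < gm"
      have ab: "a - gm < gp" "b - gm < gp" using a b gsum na nb by auto
      have "(a - gm = b - gm) = (a = b)" using na nb by auto
      then show ?thesis using dp ab na nb by (simp add: Q_def decomp_def)
    qed
  qed
  have comp: "\<forall>i<d. \<forall>j<d. (\<Sum>a<d. Q a i * Q a j) = (if i = j then 1 else 0)"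
  proof (intro allI impI)
    fix i j assume i: "i < d" and j: "j < d"
    have "(\<Sum>a<d. Q a i * Q a j) = (\<Sum>a<gm. Q a i * Q a j) + (\<Sum>a<gp. Q (gm + a) i * Q (gm + a) j)"
      unfolding gsum[symmetric] by (rule sum_split_add)
    also have "\<dots> = em i j + ep i j" using dm dp i j by (simp add: Q_def decomp_def)
    also have "\<dots> = (if i = j then 1 else 0)" by (simp add: em_def ep_def dl_def add_divide_distrib[symmetric])
    finally show "(\<Sum>a<d. Q a i * Q a j) = (if i = j then 1 else 0)" .
  qed
  have mform: "\<forall>i<d. \<forall>j<d. M $$ (i, j) = (if i = j then 1 else 0) - 2 * (\<Sum>a<gm. Q a i * Q a j)"
  proof (intro allI impI)
    fix i j assume i: "i < d" and j: "j < d"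
    have "(\<Sum>a<gm. Q a i * Q a j) = em i j" using dm i j by (simp add: Q_def decomp_def)
    then show "M $$ (i, j) = (if i = j then 1 else 0) - 2 * (\<Sum>a<gm. Q a i * Q a j)"
      by (simp add: em_def dl_def)
  qed
  show ?thesis
    by (rule exI[of _ Q], rule exI[of _ gm]) (use gsum g1 on comp mform in auto)
qed

lemma sum_kron_split: assumes "0 < (d'::nat)"
  shows "(\<Sum>k<d * d'. F (k div d') (k mod d')) = (\<Sum>a<d. \<Sum>b<d'. F a b :: real)"
proof -
  have "(\<Sum>k<d * d'. F (k div d') (k mod d')) = (\<Sum>a<d. \<Sum>b<d'. F ((a * d' + b) div d') ((a * d' + b) mod d'))"
    by (rule sum_split_mult)
  also have "\<dots> = (\<Sum>a<d. \<Sum>b<d'. F a b)"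
    using assms by (auto intro!: sum.cong)
  finally show ?thesis .
qed

lemma eq_div_mod: "(i = j) \<longleftrightarrow> (i div (d'::nat) = j div d' \<and> i mod d' = j mod d')"
  by (metis div_mult_mod_eq)

lemma sum_if_less: assumes "g \<le> (d::nat)"
  shows "(\<Sum>a<d. if a < g then h a else 0) = (\<Sum>a<g. h a :: real)"
proof -
  have "(\<Sum>a<d. if a < g then h a else 0) = (\<Sum>a<g + (d - g). if a < g then h a else 0)"
    using assms by simp
  also have "\<dots> = (\<Sum>a<g. if a < g then h a else 0) + (\<Sum>a<d - g. if g + a < g then h (g + a) else 0)"
    by (rule sum_split_add)
  also have "\<dots> = (\<Sum>a<g. h a)" by simp
  finally show ?thesis .
qed

lemma card_div_less: assumes "0 < (d'::nat)" "g \<le> d"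
  shows "{k. k < d * d' \<and> k div d' < g} = {..<g * d'}"
proof (intro Set.set_eqI)
  fix k
  have e: "k div d' < g \<longleftrightarrow> k < g * d'" using assms(1) by (simp only: div_less_iff_less_mult)
  have "g * d' \<le> d * d'" using assms(2) by simp
  then show "k \<in> {k. k < d * d' \<and> k div d' < g} \<longleftrightarrow> k \<in> {..<g * d'}"
    unfolding mem_Collect_eq lessThan_iff e by linarith
qed

lemma card_mod_less: assumes "0 < (d'::nat)" "g' \<le> d'"
  shows "card {k. k < a * d' \<and> k mod d' < g'} = a * g'"
proof -
  have "{k. k < a * d' \<and> k mod d' < g'} = (\<lambda>(x, y). x * d' + y) ` ({..<a} \<times> {..<g'})"
  proof (intro Set.set_eqI iffI)
    fix k assume k: "k \<in> {k. k < a * d' \<and> k mod d' < g'}"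
    have "k div d' < a" using k assms(1) by (simp add: div_less_iff_less_mult)
    moreover have "k = (k div d') * d' + k mod d'" by simp
    moreover have "k mod d' < g'" using k by simp
    ultimately show "k \<in> (\<lambda>(x, y). x * d' + y) ` ({..<a} \<times> {..<g'})"
      by (intro image_eqI[of _ _ "(k div d', k mod d')"]) auto
  next
    fix k assume "k \<in> (\<lambda>(x, y). x * d' + y) ` ({..<a} \<times> {..<g'})"
    then obtain x y where xy: "x < a" "y < g'" "k = x * d' + y" by auto
    have "y < d'" using xy assms by simp
    then have "k mod d' = y" using xy by simp
    moreover have "x * d' + y < a * d'"
    proof -
      have "x * d' + y < x * d' + d'" using \<open>y < d'\<close> by simp
      also have "\<dots> = (x + 1) * d'" by simp
      also have "\<dots> \<le> a * d'" using xy by (intro mult_right_mono) auto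
      finally show ?thesis .
    qed
    ultimately show "k \<in> {k. k < a * d' \<and> k mod d' < g'}" using xy by simp
  qed
  moreover have "inj_on (\<lambda>(x, y). x * d' + y) ({..<a} \<times> {..<g'})"
  proof (rule inj_onI, clarify)
    fix x y x' y' assume "x < a" "y < g'" "x' < a" "y' < g'" and eq: "x * d' + y = x' * d' + y'"
    then have "y < d'" "y' < d'" using assms by auto
    then have "(x * d' + y) div d' = x" "(x' * d' + y') div d' = x'"
      "(x * d' + y) mod d' = y" "(x' * d' + y') mod d' = y'" using assms by auto
    then show "x = x' \<and> y = y'" using eq by simp
  qed
  ultimately show ?thesis by (simp add: card_image)
qed

lemma Pin_zero: "x \<in> Pin 0 \<Longrightarrow> x = cl_one"
  by (induction rule: Pin.induct) (auto simp: scalar_prod_def)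

lemma prodl_cong: "(\<forall>k\<in>set ks. f k = h k) \<Longrightarrow> prodl d f ks = prodl d h ks"
  by (induction ks) auto

lemma cl_mult_zero_left: "cl_mult d (\<lambda>S. 0) y = (\<lambda>S. 0)"
  by (simp add: cl_mult_def fun_eq_iff)

lemma cl_mult_zero_right: "cl_mult d x (\<lambda>S. 0) = (\<lambda>S. 0)"
  by (simp add: cl_mult_def fun_eq_iff)

lemma csc_zero_fun: "csc c (\<lambda>S. 0) = (\<lambda>S. 0)"
  by (simp add: csc_def)

lemma KL:
  fixes M M' :: "real mat" and d d' g g' :: nat and x y :: cl
  assumes M: "M \<in> carrier_mat d d" "transpose_mat M * M = 1\<^sub>m d" "M * M = 1\<^sub>m d"
    and M': "M' \<in> carrier_mat d' d'" "transpose_mat M' * M' = 1\<^sub>m d'" "M' * M' = 1\<^sub>m d'"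
    and x: "x \<in> Pin (d * d')" and y: "y \<in> Pin (d * d')"
    and rx: "pin_rho (d * d') x = kron M (1\<^sub>m d')"
    and ry: "pin_rho (d * d') y = kron (1\<^sub>m d) M'"
    and tg: "real d - 2 * real g = (\<Sum>i<d. M $$ (i, i))"
    and tg': "real d' - 2 * real g' = (\<Sum>i<d'. M' $$ (i, i))"
  shows "cl_mult (d * d') x y = csc ((-1) ^ ((d * d' + 1) * g * g')) (cl_mult (d * d') y x)"
proof (cases "d = 0 \<or> d' = 0")
  case True
  then have "g = 0 \<or> g' = 0" using tg tg' by auto
  moreover have "x = cl_one" "y = cl_one" using x y True by (auto intro: Pin_zero)
  ultimately show ?thesis by auto
next
  case False
  then have dpos: "0 < d" and d'pos: "0 < d'" by auto
  define N where "N = d * d'"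
  obtain Q g0 where g0: "g0 \<le> d" "real d - 2 * real g0 = (\<Sum>i<d. M $$ (i, i))"
    and Qon: "\<forall>a<d. \<forall>b<d. (\<Sum>i<d. Q a i * Q b i) = (if a = b then 1 else 0)"
    and Qc: "\<forall>i<d. \<forall>j<d. (\<Sum>a<d. Q a i * Q a j) = (if i = j then 1 else 0)"
    and QM: "\<forall>i<d. \<forall>j<d. M $$ (i, j) = (if i = j then 1 else 0) - 2 * (\<Sum>a<g0. Q a i * Q a j)"
    using sym_inv_decomp[OF M] by blast
  obtain Q' g0' where g0': "g0' \<le> d'" "real d' - 2 * real g0' = (\<Sum>i<d'. M' $$ (i, i))"
    and Qon': "\<forall>a<d'. \<forall>b<d'. (\<Sum>i<d'. Q' a i * Q' b i) = (if a = b then 1 else 0)"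
    and Qc': "\<forall>i<d'. \<forall>j<d'. (\<Sum>a<d'. Q' a i * Q' a j) = (if i = j then 1 else 0)"
    and QM': "\<forall>i<d'. \<forall>j<d'. M' $$ (i, j) = (if i = j then 1 else 0) - 2 * (\<Sum>a<g0'. Q' a i * Q' a j)"
    using sym_inv_decomp[OF M'] by blast
  have gg: "g0 = g" using g0(2) tg by simp
  have gg': "g0' = g'" using g0'(2) tg' by simp
  define P where "P k = vec N (\<lambda>i. Q (k div d') (i div d') * Q' (k mod d') (i mod d'))" for k
  have Pc: "P k \<in> carrier_vec N" for k by (simp add: P_def)
  have Pdot: "P k \<bullet> P l = (if k = l then 1 else 0)" if k: "k < N" and l: "l < N" for k l
  proof -
    have k1: "k div d' < d" and l1: "l div d' < d" using k l d'pos by (auto simp: N_def div_less_iff_less_mult)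
    have k2: "k mod d' < d'" and l2: "l mod d' < d'" using d'pos by auto
    have "P k \<bullet> P l = (\<Sum>i<N. Q (k div d') (i div d') * Q' (k mod d') (i mod d') *
        (Q (l div d') (i div d') * Q' (l mod d') (i mod d')))"
      by (simp add: P_def scalar_prod_def atLeast0LessThan)
    also have "\<dots> = (\<Sum>a<d. \<Sum>b<d'. Q (k div d') a * Q' (k mod d') b * (Q (l div d') a * Q' (l mod d') b))"
      unfolding N_def by (rule sum_kron_split[OF d'pos])
    also have "\<dots> = (\<Sum>a<d. \<Sum>b<d'. (Q (k div d') a * Q (l div d') a) * (Q' (k mod d') b * Q' (l mod d') b))"
      by (auto simp: mult_ac intro!: sum.cong)
    also have "\<dots> = (\<Sum>a<d. Q (k div d') a * Q (l div d') a) * (\<Sum>b<d'. Q' (k mod d') b * Q' (l mod d') b)"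
      by (simp add: sum_product)
    also have "\<dots> = (if k = l then 1 else 0)"
      using Qon k1 l1 Qon' k2 l2 eq_div_mod[of k l d'] by auto
    finally show ?thesis .
  qed
  have unitP: "unitv N (P k)" if "k < N" for k using Pdot[OF that that] Pc by (simp add: unitv_def)
  define f where "f k = (if k < N then cl_vec N (P k) else (\<lambda>S. 0))" for k
  have fc: "\<forall>a. f a \<in> cl_carrier N" by (auto simp: f_def cl_carrier_def cl_vec_def)
  have anti: "\<forall>a b. a \<noteq> b \<longrightarrow> cl_mult N (f a) (f b) = csc (-1) (cl_mult N (f b) (f a))"
  proof (intro allI impI)
    fix a b :: nat assume ab: "a \<noteq> b"
    show "cl_mult N (f a) (f b) = csc (-1) (cl_mult N (f b) (f a))"
    proof (cases "a < N \<and> b < N")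
      case True
      then show ?thesis using cl_vec_orth[OF Pc[of b], of "P a"] Pdot[of a b] ab by (simp add: f_def)
    next
      case False
      then show ?thesis by (auto simp: f_def cl_mult_zero_left cl_mult_zero_right csc_zero_fun)
    qed
  qed
  define SA where "SA = filter (\<lambda>k. k div d' < g) [0..<N]"
  define SB where "SB = filter (\<lambda>k. k mod d' < g') [0..<N]"
  have setSA: "set SA = {..<g * d'}"
    using card_div_less[OF d'pos, of g d] g0(1) gg by (auto simp: SA_def N_def)
  have setSB: "set SB = {k. k < d * d' \<and> k mod d' < g'}" by (auto simp: SB_def N_def)
  have dA: "distinct SA" and dB: "distinct SB" by (simp_all add: SA_def SB_def)
  have SAN: "\<forall>k\<in>set SA. k < N" and SBN: "\<forall>k\<in>set SB. k < N" by (auto simp: SA_def SB_def)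
  have lenA: "length SA = g * d'" using distinct_card[OF dA] setSA by simp
  have lenB: "length SB = d * g'" using distinct_card[OF dB] setSB card_mod_less[OF d'pos, of g' d] g0'(1) gg' by simp
  have capAB: "card (set SA \<inter> set SB) = g * g'"
  proof -
    have "set SA \<inter> set SB = {k. k < g * d' \<and> k mod d' < g'}"
      using setSA setSB g0(1) gg d'pos by (auto intro: less_le_trans)
    then show ?thesis using card_mod_less[OF d'pos, of g' g] g0'(1) gg' by simp
  qed
  let ?x0 = "prodl N f SA" and ?y0 = "prodl N f SB"
  have x0eq: "?x0 = prodl N (\<lambda>k. cl_vec N (P k)) SA" by (rule prodl_cong) (use SAN in \<open>simp add: f_def\<close>)
  have y0eq: "?y0 = prodl N (\<lambda>k. cl_vec N (P k)) SB" by (rule prodl_cong) (use SBN in \<open>simp add: f_def\<close>)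
  have x0P: "?x0 \<in> Pin N" unfolding x0eq by (rule prodl_Pin) (use SAN unitP in auto)
  have y0P: "?y0 \<in> Pin N" unfolding y0eq by (rule prodl_Pin) (use SBN unitP in auto)
  have onA: "onorm N P (set SA)" using SAN Pdot Pc by (auto simp: onorm_def)
  have onB: "onorm N P (set SB)" using SBN Pdot Pc by (auto simp: onorm_def)
  have ij_split: "i div d' < d" "i mod d' < d'" if "i < N" for i
    using that d'pos by (auto simp: N_def div_less_iff_less_mult)
  have rx0: "pin_rho N ?x0 = kron M (1\<^sub>m d')"
  proof -
    have "pin_rho N ?x0 = mat N N (\<lambda>(i, j). (if i = j then 1 else 0) - 2 * (\<Sum>k\<in>set SA. P k $ i * P k $ j))"
      unfolding x0eq by (rule prodl_rho[OF onA dA])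
    also have "\<dots> = kron M (1\<^sub>m d')"
    proof (rule eq_matI)
      show "dim_row (mat N N (\<lambda>(i, j). (if i = j then 1 else 0) - 2 * (\<Sum>k\<in>set SA. P k $ i * P k $ j))) = dim_row (kron M (1\<^sub>m d'))"
        "dim_col (mat N N (\<lambda>(i, j). (if i = j then 1 else 0) - 2 * (\<Sum>k\<in>set SA. P k $ i * P k $ j))) = dim_col (kron M (1\<^sub>m d'))"
        using M by (auto simp: kron_def N_def)
      fix i j assume "i < dim_row (kron M (1\<^sub>m d'))" "j < dim_col (kron M (1\<^sub>m d'))"
      then have i: "i < N" and j: "j < N" using M by (auto simp: kron_def N_def)
      have sA': "set SA = {k \<in> {..<N}. k div d' < g}" by (auto simp: SA_def)
      have "(\<Sum>k\<in>set SA. P k $ i * P k $ j) = (\<Sum>k<N. if k div d' < g then P k $ i * P k $ j else 0)"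
        unfolding sA' by (rule sum.inter_filter) simp
      also have "\<dots> = (\<Sum>a<d. \<Sum>b<d'. if a < g then Q a (i div d') * Q' b (i mod d') * (Q a (j div d') * Q' b (j mod d')) else 0)"
        unfolding N_def using i j
        by (subst sum_kron_split[OF d'pos, symmetric]) (auto simp: P_def N_def intro!: sum.cong)
      also have "\<dots> = (\<Sum>a<d. if a < g then (Q a (i div d') * Q a (j div d')) * (\<Sum>b<d'. Q' b (i mod d') * Q' b (j mod d')) else 0)"
        by (rule sum.cong) (auto simp: sum_distrib_left mult_ac intro!: sum.cong)
      also have "\<dots> = (\<Sum>a<g. Q a (i div d') * Q a (j div d')) * (if i mod d' = j mod d' then 1 else 0)"
        using sum_if_less[of g d] g0(1) gg Qc' ij_split[OF i] ij_split[OF j]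
        by (simp add: sum_distrib_right)
      finally have S: "(\<Sum>k\<in>set SA. P k $ i * P k $ j) = (\<Sum>a<g. Q a (i div d') * Q a (j div d')) * (if i mod d' = j mod d' then 1 else 0)" .
      have "kron M (1\<^sub>m d') $$ (i, j) = M $$ (i div d', j div d') * (if i mod d' = j mod d' then 1 else 0)"
        using i j M ij_split[OF i] ij_split[OF j] by (simp add: kron_def N_def)
      also have "\<dots> = mat N N (\<lambda>(i, j). (if i = j then 1 else 0) - 2 * (\<Sum>k\<in>set SA. P k $ i * P k $ j)) $$ (i, j)"
      proof -
        have dij: "(if i = j then 1 else 0) = (if i div d' = j div d' then 1 else 0) * (if i mod d' = j mod d' then (1::real) else 0)"
          using eq_div_mod[of i j d'] by auto
        have Mij: "M $$ (i div d', j div d') = (if i div d' = j div d' then 1 else 0) - 2 * (\<Sum>a<g. Q a (i div d') * Q a (j div d'))"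
          using QM ij_split[OF i] ij_split[OF j] gg by blast
        show ?thesis using i j unfolding index_mat(1)[OF i j] split unfolding dij S Mij by (simp only: algebra_simps)
      qed
      finally show "mat N N (\<lambda>(i, j). (if i = j then 1 else 0) - 2 * (\<Sum>k\<in>set SA. P k $ i * P k $ j)) $$ (i, j) = kron M (1\<^sub>m d') $$ (i, j)" by simp
    qed
    finally show ?thesis .
  qed
  have ry0: "pin_rho N ?y0 = kron (1\<^sub>m d) M'"
  proof -
    have "pin_rho N ?y0 = mat N N (\<lambda>(i, j). (if i = j then 1 else 0) - 2 * (\<Sum>k\<in>set SB. P k $ i * P k $ j))"
      unfolding y0eq by (rule prodl_rho[OF onB dB])
    also have "\<dots> = kron (1\<^sub>m d) M'"
    proof (rule eq_matI)
      show "dim_row (mat N N (\<lambda>(i, j). (if i = j then 1 else 0) - 2 * (\<Sum>k\<in>set SB. P k $ i * P k $ j))) = dim_row (kron (1\<^sub>m d) M')"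
        "dim_col (mat N N (\<lambda>(i, j). (if i = j then 1 else 0) - 2 * (\<Sum>k\<in>set SB. P k $ i * P k $ j))) = dim_col (kron (1\<^sub>m d) M')"
        using M' by (auto simp: kron_def N_def)
      fix i j assume "i < dim_row (kron (1\<^sub>m d) M')" "j < dim_col (kron (1\<^sub>m d) M')"
      then have i: "i < N" and j: "j < N" using M' by (auto simp: kron_def N_def)
      have sB': "set SB = {k \<in> {..<N}. k mod d' < g'}" by (auto simp: SB_def)
      have "(\<Sum>k\<in>set SB. P k $ i * P k $ j) = (\<Sum>k<N. if k mod d' < g' then P k $ i * P k $ j else 0)"
        unfolding sB' by (rule sum.inter_filter) simp
      also have "\<dots> = (\<Sum>a<d. \<Sum>b<d'. if b < g' then Q a (i div d') * Q' b (i mod d') * (Q a (j div d') * Q' b (j mod d')) else 0)"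
        unfolding N_def using i j
        by (subst sum_kron_split[OF d'pos, symmetric]) (auto simp: P_def N_def intro!: sum.cong)
      also have "\<dots> = (\<Sum>a<d. (Q a (i div d') * Q a (j div d')) * (\<Sum>b<d'. if b < g' then Q' b (i mod d') * Q' b (j mod d') else 0))"
        by (rule sum.cong) (auto simp: sum_distrib_left mult_ac intro!: sum.cong)
      also have "\<dots> = (if i div d' = j div d' then 1 else 0) * (\<Sum>b<g'. Q' b (i mod d') * Q' b (j mod d'))"
        using sum_if_less[of g' d'] g0'(1) gg' Qc ij_split[OF i] ij_split[OF j]
        by (simp add: sum_distrib_right[symmetric])
      finally have S: "(\<Sum>k\<in>set SB. P k $ i * P k $ j) = (if i div d' = j div d' then 1 else 0) * (\<Sum>b<g'. Q' b (i mod d') * Q' b (j mod d'))" .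
      have "kron (1\<^sub>m d) M' $$ (i, j) = (if i div d' = j div d' then 1 else 0) * M' $$ (i mod d', j mod d')"
        using i j M' ij_split[OF i] ij_split[OF j] by (simp add: kron_def N_def)
      also have "\<dots> = mat N N (\<lambda>(i, j). (if i = j then 1 else 0) - 2 * (\<Sum>k\<in>set SB. P k $ i * P k $ j)) $$ (i, j)"
      proof -
        have dij: "(if i = j then 1 else 0) = (if i div d' = j div d' then 1 else 0) * (if i mod d' = j mod d' then (1::real) else 0)"
          using eq_div_mod[of i j d'] by auto
        have Mij: "M' $$ (i mod d', j mod d') = (if i mod d' = j mod d' then 1 else 0) - 2 * (\<Sum>a<g'. Q' a (i mod d') * Q' a (j mod d'))"
          using QM' ij_split[OF i] ij_split[OF j] gg' by blast
        show ?thesis using i j unfolding index_mat(1)[OF i j] split unfolding dij S Mij by (simp only: algebra_simps)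
      qed
      finally show "mat N N (\<lambda>(i, j). (if i = j then 1 else 0) - 2 * (\<Sum>k\<in>set SB. P k $ i * P k $ j)) $$ (i, j) = kron (1\<^sub>m d) M' $$ (i, j)" by simp
    qed
    finally show ?thesis .
  qed
  have rxx: "pin_rho N x = pin_rho N ?x0" by (simp only: N_def rx rx0[unfolded N_def])
  have ryy: "pin_rho N y = pin_rho N ?y0" by (simp only: N_def ry ry0[unfolded N_def])
  have xs: "x = ?x0 \<or> x = csc (-1) ?x0"
    by (rule Pin_rho_eq[OF _ x0P rxx]) (use x in \<open>simp add: N_def\<close>)
  have ys: "y = ?y0 \<or> y = csc (-1) ?y0"
    by (rule Pin_rho_eq[OF _ y0P ryy]) (use y in \<open>simp add: N_def\<close>)
  obtain sx where sx: "x = csc sx ?x0" "sx * sx = 1"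
  proof (cases "x = ?x0")
    case True then show ?thesis using that[of 1] by simp
  next
    case False then show ?thesis using that[of "-1"] xs by simp
  qed
  obtain sy where sy: "y = csc sy ?y0" "sy * sy = 1"
  proof (cases "y = ?y0")
    case True then show ?thesis using that[of 1] by simp
  next
    case False then show ?thesis using that[of "-1"] ys by simp
  qed
  have comm0: "cl_mult N ?x0 ?y0 = csc ((-1) ^ (length SA * length SB + card (set SA \<inter> set SB))) (cl_mult N ?y0 ?x0)"
    by (rule prodl_comm[OF anti fc dA dB])
  have ex: "length SA * length SB + card (set SA \<inter> set SB) = (d * d' + 1) * g * g'"
    unfolding lenA lenB capAB by (simp add: algebra_simps)
  have "cl_mult N x y = csc (sx * sy) (cl_mult N ?x0 ?y0)"
    unfolding sx(1) sy(1) by (simp add: cl_mult_csc_left cl_mult_csc_right mult.commute)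
  also have "\<dots> = csc ((-1) ^ ((d * d' + 1) * g * g')) (csc (sy * sx) (cl_mult N ?y0 ?x0))"
    unfolding comm0 ex by (simp add: mult_ac)
  also have "csc (sy * sx) (cl_mult N ?y0 ?x0) = cl_mult N y x"
    unfolding sx(1) sy(1) by (simp add: cl_mult_csc_left cl_mult_csc_right mult.commute)
  finally show ?thesis by (simp add: N_def)
qed

lemma sym_carrier_id: "id \<in> carrier (sym_group n)"
  by (simp add: sym_group_carrier permutes_id)

lemma sym_mult_eq: "x \<otimes>\<^bsub>sym_group n\<^esub> y = x \<circ> y"
  by (simp add: sym_group_mult)

lemma sym_comp_closed: "x \<in> carrier (sym_group n) \<Longrightarrow> y \<in> carrier (sym_group n) \<Longrightarrow> x \<circ> y \<in> carrier (sym_group n)"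
  by (simp add: sym_group_carrier permutes_compose)

lemma transp_carrier: "a \<in> {1..n} \<Longrightarrow> b \<in> {1..n} \<Longrightarrow> Transposition.transpose a b \<in> carrier (sym_group n)"
  by (simp add: sym_group_carrier permutes_swap_id)

lemma rep_mat: "orth_rep (sym_group n) d \<pi> \<Longrightarrow> s \<in> carrier (sym_group n) \<Longrightarrow>
   \<pi> s \<in> carrier_mat d d \<and> transpose_mat (\<pi> s) * \<pi> s = 1\<^sub>m d"
  by (simp add: orth_rep_def orth_mat_def)

lemma rep_hom: "orth_rep (sym_group n) d \<pi> \<Longrightarrow> s \<in> carrier (sym_group n) \<Longrightarrow> t \<in> carrier (sym_group n) \<Longrightarrow>
   \<pi> (s \<circ> t) = \<pi> s * \<pi> t"
  by (simp add: orth_rep_def sym_group_mult)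

lemma rep_id: assumes r: "orth_rep (sym_group n) d \<pi>" shows "\<pi> id = 1\<^sub>m d"
proof -
  let ?A = "\<pi> id"
  have A: "?A \<in> carrier_mat d d" "transpose_mat ?A * ?A = 1\<^sub>m d" using rep_mat[OF r sym_carrier_id] by auto
  have AA: "?A = ?A * ?A" using rep_hom[OF r sym_carrier_id sym_carrier_id] by simp
  have "?A = (transpose_mat ?A * ?A) * ?A" using A by simp
  also have "\<dots> = transpose_mat ?A * (?A * ?A)"
    by (rule assoc_mult_mat) (use A(1) in auto)
  also have "\<dots> = 1\<^sub>m d" using AA[symmetric] A by simp
  finally show ?thesis .
qed

lemma rep_transp: assumes r: "orth_rep (sym_group n) d \<pi>" and a: "a \<in> {1..n}" and b: "b \<in> {1..n}"
  shows "\<pi> (Transposition.transpose a b) \<in> carrier_mat d d"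
    "transpose_mat (\<pi> (Transposition.transpose a b)) * \<pi> (Transposition.transpose a b) = 1\<^sub>m d"
    "\<pi> (Transposition.transpose a b) * \<pi> (Transposition.transpose a b) = 1\<^sub>m d"
proof -
  have t: "Transposition.transpose a b \<in> carrier (sym_group n)" by (rule transp_carrier[OF a b])
  show "\<pi> (Transposition.transpose a b) \<in> carrier_mat d d"
    "transpose_mat (\<pi> (Transposition.transpose a b)) * \<pi> (Transposition.transpose a b) = 1\<^sub>m d"
    using rep_mat[OF r t] by auto
  show "\<pi> (Transposition.transpose a b) * \<pi> (Transposition.transpose a b) = 1\<^sub>m d"
    using rep_hom[OF r t t] rep_id[OF r] by simp
qed

lemma trace_comm_sum: fixes A B :: "real mat" assumes "A \<in> carrier_mat d d" "B \<in> carrier_mat d d"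
  shows "(\<Sum>i<d. (A * B) $$ (i, i)) = (\<Sum>i<d. (B * A) $$ (i, i))"
proof -
  have "(\<Sum>i<d. (A * B) $$ (i, i)) = (\<Sum>i<d. \<Sum>k<d. A $$ (i, k) * B $$ (k, i))"
    by (rule sum.cong[OF refl]) (use mat_mult_entry[OF assms] in auto)
  also have "\<dots> = (\<Sum>k<d. \<Sum>i<d. A $$ (i, k) * B $$ (k, i))"
    by (rule sum.swap)
  also have "\<dots> = (\<Sum>k<d. \<Sum>i<d. B $$ (k, i) * A $$ (i, k))"
    by (rule sum.cong[OF refl], rule sum.cong[OF refl], rule mult.commute)
  also have "\<dots> = (\<Sum>i<d. (B * A) $$ (i, i))"
    by (rule sum.cong[OF refl]) (use mat_mult_entry[OF assms(2,1)] in auto)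
  finally show ?thesis .
qed

lemma char_sum: "\<pi> s \<in> carrier_mat d d \<Longrightarrow> character \<pi> s = (\<Sum>i<d. \<pi> s $$ (i, i))"
  by (simp add: character_def)

lemma char_transp: assumes r: "orth_rep (sym_group n) d \<pi>" and a: "a \<in> {1..n}" and b: "b \<in> {1..n}"
  and ab: "a \<noteq> b"
  shows "character \<pi> (Transposition.transpose a b) = character \<pi> s1"
proof -
  have n2: "2 \<le> n" using a b ab by auto
  define c where "c = Transposition.transpose 1 a b"
  have c: "c \<in> {1..n}" using a b n2 by (auto simp: c_def transpose_def)
  have c1: "c \<noteq> 1" using ab a by (auto simp: c_def transpose_def)
  define \<rho> where "\<rho> = Transposition.transpose 1 a \<circ> Transposition.transpose 2 c"
  have \<rho>c: "\<rho> \<in> carrier (sym_group n)"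
    unfolding \<rho>_def by (intro sym_comp_closed transp_carrier) (use a c n2 in auto)
  have \<rho>p: "\<rho> permutes {1..n}" using \<rho>c by (simp add: sym_group_carrier)
  have r1: "\<rho> 1 = a" using c1 by (simp add: \<rho>_def transpose_def)
  have r2: "\<rho> 2 = b" by (simp add: \<rho>_def c_def)
  have i1: "inv_into UNIV \<rho> a = 1" and i2: "inv_into UNIV \<rho> b = 2"
    using r1 r2 permutes_inv_eq[OF \<rho>p] by auto
  have conj: "Transposition.transpose a b \<circ> \<rho> = \<rho> \<circ> s1"
    using transpose_comp_eq[OF permutes_bij[OF \<rho>p], of a b] by (simp add: i1 i2 s1_def)
  define \<rho>' where "\<rho>' = inv_into UNIV \<rho>"
  have \<rho>'c: "\<rho>' \<in> carrier (sym_group n)" using permutes_inv[OF \<rho>p] by (simp add: \<rho>'_def sym_group_carrier)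
  have s1c: "s1 \<in> carrier (sym_group n)" unfolding s1_def by (rule transp_carrier) (use n2 in auto)
  have tc: "Transposition.transpose a b \<in> carrier (sym_group n)" by (rule transp_carrier[OF a b])
  let ?T = "\<pi> (Transposition.transpose a b)" and ?R = "\<pi> \<rho>" and ?R' = "\<pi> \<rho>'" and ?S = "\<pi> s1"
  have Tc: "?T \<in> carrier_mat d d" and Rc: "?R \<in> carrier_mat d d" and R'c: "?R' \<in> carrier_mat d d"
    and Sc: "?S \<in> carrier_mat d d"
    using rep_mat[OF r tc] rep_mat[OF r \<rho>c] rep_mat[OF r \<rho>'c] rep_mat[OF r s1c] by auto
  have TR: "?T * ?R = ?R * ?S"
    using rep_hom[OF r tc \<rho>c] rep_hom[OF r \<rho>c s1c] conj by simp
  have RR': "?R * ?R' = 1\<^sub>m d"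
    using rep_hom[OF r \<rho>c \<rho>'c] rep_id[OF r] permutes_inv_o(1)[OF \<rho>p] by (simp add: \<rho>'_def)
  have R'R: "?R' * ?R = 1\<^sub>m d"
    using rep_hom[OF r \<rho>'c \<rho>c] rep_id[OF r] permutes_inv_o(2)[OF \<rho>p] by (simp add: \<rho>'_def)
  have "?T = ?T * (?R * ?R')" using RR' Tc by simp
  also have "\<dots> = (?T * ?R) * ?R'" using Tc Rc R'c by (simp add: assoc_mult_mat[of _ d d _ d _ d])
  also have "\<dots> = (?R * ?S) * ?R'" using TR by simp
  finally have T: "?T = (?R * ?S) * ?R'" .
  have "(\<Sum>i<d. ?T $$ (i, i)) = (\<Sum>i<d. (?R' * (?R * ?S)) $$ (i, i))"
    unfolding T by (rule trace_comm_sum) (use Rc Sc R'c in auto)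
  also have "?R' * (?R * ?S) = ?S" using R'c Rc Sc R'R by (simp add: assoc_mult_mat[of _ d d _ d _ d, symmetric])
  finally show ?thesis using Tc Sc by (simp add: char_sum)
qed

lemma kron_mixed: fixes A B :: "real mat" assumes A: "A \<in> carrier_mat d d" and B: "B \<in> carrier_mat d' d'"
  shows "kron A (1\<^sub>m d') * kron (1\<^sub>m d) B = kron A B"
proof (rule eq_matI)
  show "dim_row (kron A (1\<^sub>m d') * kron (1\<^sub>m d) B) = dim_row (kron A B)"
    "dim_col (kron A (1\<^sub>m d') * kron (1\<^sub>m d) B) = dim_col (kron A B)"
    using A B by (auto simp: kron_def)
  fix i j assume "i < dim_row (kron A B)" "j < dim_col (kron A B)"
  then have i: "i < d * d'" and j: "j < d * d'" using A B by (auto simp: kron_def)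
  then have d'pos: "0 < d'" by (cases d') auto
  have ij: "i div d' < d" "j div d' < d" "i mod d' < d'" "j mod d' < d'"
    using i j d'pos by (auto simp: div_less_iff_less_mult)
  have "(kron A (1\<^sub>m d') * kron (1\<^sub>m d) B) $$ (i, j) =
     (\<Sum>k<d * d'. kron A (1\<^sub>m d') $$ (i, k) * kron (1\<^sub>m d) B $$ (k, j))"
    using i j A B by (simp add: kron_def scalar_prod_def atLeast0LessThan)
  also have "\<dots> = (\<Sum>k<d * d'. A $$ (i div d', k div d') * (if i mod d' = k mod d' then 1 else 0) *
      ((if k div d' = j div d' then 1 else 0) * B $$ (k mod d', j mod d')))"
  proof (rule sum.cong[OF refl])
    fix k assume "k \<in> {..<d * d'}"
    then have k: "k div d' < d" "k mod d' < d'" using d'pos by (auto simp: div_less_iff_less_mult)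
    show "kron A (1\<^sub>m d') $$ (i, k) * kron (1\<^sub>m d) B $$ (k, j) = A $$ (i div d', k div d') * (if i mod d' = k mod d' then 1 else 0) *
      ((if k div d' = j div d' then 1 else 0) * B $$ (k mod d', j mod d'))"
      using i j k ij A B \<open>k \<in> {..<d * d'}\<close> by (simp add: kron_def)
  qed
  also have "\<dots> = (\<Sum>a<d. \<Sum>b<d'. A $$ (i div d', a) * (if i mod d' = b then 1 else 0) *
      ((if a = j div d' then 1 else 0) * B $$ (b, j mod d')))"
    by (rule sum_kron_split[OF d'pos])
  also have "\<dots> = (\<Sum>a<d. A $$ (i div d', a) * (if a = j div d' then 1 else 0)) * (\<Sum>b<d'. (if i mod d' = b then 1 else 0) * B $$ (b, j mod d'))"
    by (simp add: sum_product mult_ac)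
  also have "\<dots> = A $$ (i div d', j div d') * B $$ (i mod d', j mod d')"
    using sum_delta_right[OF ij(2), of "\<lambda>a. A $$ (i div d', a)"] sum_delta_left[OF ij(3), of "\<lambda>b. B $$ (b, j mod d')"]
    by simp
  also have "\<dots> = kron A B $$ (i, j)" using i j A B by (simp add: kron_def)
  finally show "(kron A (1\<^sub>m d') * kron (1\<^sub>m d) B) $$ (i, j) = kron A B $$ (i, j)" .
qed

lemma Pin_nonzero: "x \<in> Pin d \<Longrightarrow> x \<noteq> (\<lambda>S. 0)"
  using bf_Pin[of x d] by (auto simp: bf_def)

lemma Pin_one_of_idem: assumes x: "x \<in> Pin d" and e: "x = cl_mult d x x" shows "x = cl_one"
proof -
  note xi = cl_inv_Pin[OF x]
  have "cl_one = cl_mult d (cl_inv d x) x" using xi by simp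
  also have "\<dots> = cl_mult d (cl_inv d x) (cl_mult d x x)" using e by simp
  also have "\<dots> = x" using xi Pin_carrier[OF x] by (simp add: cl_assoc[symmetric] cl_one_left)
  finally show ?thesis by simp
qed

lemma gval_nat: assumes r: "orth_rep (sym_group n) d \<pi>" and n2: "2 \<le> n"
  shows "\<exists>g. gval n d \<pi> = real g \<and> real d - 2 * real g = (\<Sum>i<d. \<pi> s1 $$ (i, i))"
proof -
  have s1c: "s1 \<in> carrier (sym_group n)" unfolding s1_def by (rule transp_carrier) (use n2 in auto)
  have "\<pi> s1 \<in> carrier_mat d d" "transpose_mat (\<pi> s1) * \<pi> s1 = 1\<^sub>m d" "\<pi> s1 * \<pi> s1 = 1\<^sub>m d"
    using rep_transp[OF r, of 1 2] n2 by (auto simp: s1_def)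
  then obtain Q g where g: "real d - 2 * real g = (\<Sum>i<d. \<pi> s1 $$ (i, i))"
    using sym_inv_decomp by blast
  moreover have "gval n d \<pi> = real g"
    using g n2 \<open>\<pi> s1 \<in> carrier_mat d d\<close> by (simp add: gval_def char_sum)
  ultimately show ?thesis by blast
qed

lemma even_sign: assumes "real e = 2 * real_of_int k" shows "(-1::real) ^ e = 1"
proof -
  have "int e = 2 * k" using assms by (metis of_int_eq_iff of_int_mult of_int_numeral of_int_of_nat_eq)
  then have "even e" by presburger
  then show ?thesis by simp
qed

lemma pow_neg1_even: "(-1::real) ^ e = 1 \<Longrightarrow> even e"
  using neg_one_odd_power[of e] by (cases "even e") auto

theorem theorem1p2:
  fixes n n' d d' :: nat
    and \<pi> \<pi>' :: "(nat \<Rightarrow> nat) \<Rightarrow> real mat"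
  assumes "n \<ge> 1" and "n' \<ge> 1"
    and "orth_rep (sym_group n) d \<pi>"
    and "orth_rep (sym_group n') d' \<pi>'"
  shows "spinorial (sym_group n \<times>\<times> sym_group n') (d * d') (ext_tensor \<pi> \<pi>') \<longleftrightarrow>
     (spinorial (sym_group n) (d * d') (\<lambda>\<sigma>. ext_tensor \<pi> \<pi>' (\<sigma>, id)) \<and>
      spinorial (sym_group n') (d * d') (\<lambda>\<tau>. ext_tensor \<pi> \<pi>' (id, \<tau>)) \<and>
      (\<exists>k::int. (real (d * d') + 1) * gval n d \<pi> * gval n' d' \<pi>' = 2 * real_of_int k))"
proof -
  note r = assms(3) and r' = assms(4)
  let ?G = "sym_group n" and ?H = "sym_group n'"
  define N where "N = d * d'"
  have ext: "ext_tensor \<pi> \<pi>' (s, t) = kron (\<pi> s) (\<pi>' t)" for s t by (simp add: ext_tensor_def)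
  have id1: "\<pi> id = 1\<^sub>m d" by (rule rep_id[OF r])
  have id2: "\<pi>' id = 1\<^sub>m d'" by (rule rep_id[OF r'])
  have mulp: "(a, b) \<otimes>\<^bsub>?G \<times>\<times> ?H\<^esub> (c, e) = (a \<circ> c, b \<circ> e)" for a b c e
    by (simp add: DirProd_def sym_group_mult)
  have gzero: "gval n d \<pi> = 0" if "\<not> 2 \<le> n" for n d and \<pi> :: "(nat \<Rightarrow> nat) \<Rightarrow> real mat"
    using that by (simp add: gval_def)
  show ?thesis
  proof
    assume "spinorial (?G \<times>\<times> ?H) (d * d') (ext_tensor \<pi> \<pi>')"
    then obtain P where PL: "\<And>p. p \<in> carrier (?G \<times>\<times> ?H) \<Longrightarrow> P p \<in> Pin N \<and> pin_rho N (P p) = ext_tensor \<pi> \<pi>' p"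
      and PH: "\<And>p q. p \<in> carrier (?G \<times>\<times> ?H) \<Longrightarrow> q \<in> carrier (?G \<times>\<times> ?H) \<Longrightarrow>
         P (p \<otimes>\<^bsub>?G \<times>\<times> ?H\<^esub> q) = cl_mult N (P p) (P q)"
      unfolding spinorial_def N_def by blast
    have S1: "spinorial ?G (d * d') (\<lambda>\<sigma>. ext_tensor \<pi> \<pi>' (\<sigma>, id))"
      unfolding spinorial_def N_def[symmetric]
    proof (intro exI[of _ "\<lambda>\<sigma>. P (\<sigma>, id)"] conjI ballI)
      fix s assume s: "s \<in> carrier ?G"
      then have "(s, id) \<in> carrier (?G \<times>\<times> ?H)" by (simp add: sym_carrier_id)
      then show "P (s, id) \<in> Pin N" "pin_rho N (P (s, id)) = ext_tensor \<pi> \<pi>' (s, id)" using PL by auto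
    next
      fix s t assume s: "s \<in> carrier ?G" and t: "t \<in> carrier ?G"
      have "P (s \<otimes>\<^bsub>?G\<^esub> t, id) = P ((s, id) \<otimes>\<^bsub>?G \<times>\<times> ?H\<^esub> (t, id))" by (simp add: mulp sym_group_mult)
      also have "\<dots> = cl_mult N (P (s, id)) (P (t, id))" using s t by (intro PH) (auto simp: sym_carrier_id)
      finally show "P (s \<otimes>\<^bsub>?G\<^esub> t, id) = cl_mult N (P (s, id)) (P (t, id))" .
    qed
    have S2: "spinorial ?H (d * d') (\<lambda>\<tau>. ext_tensor \<pi> \<pi>' (id, \<tau>))"
      unfolding spinorial_def N_def[symmetric]
    proof (intro exI[of _ "\<lambda>\<tau>. P (id, \<tau>)"] conjI ballI)
      fix s assume s: "s \<in> carrier ?H"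
      then have "(id, s) \<in> carrier (?G \<times>\<times> ?H)" by (simp add: sym_carrier_id)
      then show "P (id, s) \<in> Pin N" "pin_rho N (P (id, s)) = ext_tensor \<pi> \<pi>' (id, s)" using PL by auto
    next
      fix s t assume s: "s \<in> carrier ?H" and t: "t \<in> carrier ?H"
      have "P (id, s \<otimes>\<^bsub>?H\<^esub> t) = P ((id, s) \<otimes>\<^bsub>?G \<times>\<times> ?H\<^esub> (id, t))" by (simp add: mulp sym_group_mult)
      also have "\<dots> = cl_mult N (P (id, s)) (P (id, t))" using s t by (intro PH) (auto simp: sym_carrier_id)
      finally show "P (id, s \<otimes>\<^bsub>?H\<^esub> t) = cl_mult N (P (id, s)) (P (id, t))" .
    qed
    have S3: "\<exists>k::int. (real (d * d') + 1) * gval n d \<pi> * gval n' d' \<pi>' = 2 * real_of_int k"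
    proof (cases "2 \<le> n \<and> 2 \<le> n'")
      case False
      then have "gval n d \<pi> = 0 \<or> gval n' d' \<pi>' = 0" using gzero by blast
      then show ?thesis by (intro exI[of _ 0]) auto
    next
      case True
      obtain g where g: "gval n d \<pi> = real g" "real d - 2 * real g = (\<Sum>i<d. \<pi> s1 $$ (i, i))"
        using gval_nat[OF r] True by blast
      obtain g' where g': "gval n' d' \<pi>' = real g'" "real d' - 2 * real g' = (\<Sum>i<d'. \<pi>' s1 $$ (i, i))"
        using gval_nat[OF r'] True by blast
      have s1G: "s1 \<in> carrier ?G" and s1H: "s1 \<in> carrier ?H"
        unfolding s1_def using True by (auto intro: transp_carrier)
      have c1: "(s1, id) \<in> carrier (?G \<times>\<times> ?H)" "(id, s1) \<in> carrier (?G \<times>\<times> ?H)"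
        using s1G s1H by (auto simp: sym_carrier_id)
      let ?x = "P (s1, id)" and ?y = "P (id, s1)"
      have xP: "?x \<in> Pin N" and yP: "?y \<in> Pin N" using PL c1 by auto
      have rx: "pin_rho N ?x = kron (\<pi> s1) (1\<^sub>m d')" using PL[OF c1(1)] by (simp add: ext id2)
      have ry: "pin_rho N ?y = kron (1\<^sub>m d) (\<pi>' s1)" using PL[OF c1(2)] by (simp add: ext id1)
      have comm: "cl_mult N ?x ?y = cl_mult N ?y ?x"
      proof -
        have "cl_mult N ?x ?y = P ((s1, id) \<otimes>\<^bsub>?G \<times>\<times> ?H\<^esub> (id, s1))" using PH[OF c1] by simp
        also have "\<dots> = P ((id, s1) \<otimes>\<^bsub>?G \<times>\<times> ?H\<^esub> (s1, id))" by (simp add: mulp sym_group_mult)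
        also have "\<dots> = cl_mult N ?y ?x" using PH[OF c1(2) c1(1)] by simp
        finally show ?thesis .
      qed
      have M: "\<pi> s1 \<in> carrier_mat d d" "transpose_mat (\<pi> s1) * \<pi> s1 = 1\<^sub>m d" "\<pi> s1 * \<pi> s1 = 1\<^sub>m d"
        using rep_transp[OF r, of 1 2] True by (auto simp: s1_def)
      have M': "\<pi>' s1 \<in> carrier_mat d' d'" "transpose_mat (\<pi>' s1) * \<pi>' s1 = 1\<^sub>m d'" "\<pi>' s1 * \<pi>' s1 = 1\<^sub>m d'"
        using rep_transp[OF r', of 1 2] True by (auto simp: s1_def)
      have KLr: "cl_mult N ?x ?y = csc ((-1) ^ ((d * d' + 1) * g * g')) (cl_mult N ?y ?x)"
        using KL[OF M M' xP[unfolded N_def] yP[unfolded N_def] rx[unfolded N_def] ry[unfolded N_def] g(2) g'(2)]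
        by (simp add: N_def)
      have yxP: "cl_mult N ?y ?x \<in> Pin N" by (rule Pin_mult_closed[OF yP xP])
      have "(-1::real) ^ ((d * d' + 1) * g * g') = 1"
      proof (rule ccontr)
        assume ne: "(-1::real) ^ ((d * d' + 1) * g * g') \<noteq> 1"
        have "csc ((-1) ^ ((d * d' + 1) * g * g')) (cl_mult N ?y ?x) = cl_mult N ?y ?x"
          using KLr comm by simp
        then have "cl_mult N ?y ?x = (\<lambda>S. 0)" using csc_zero_eq ne by blast
        then show False using Pin_nonzero[OF yxP] by simp
      qed
      then have "even ((d * d' + 1) * g * g')" by (rule pow_neg1_even)
      then obtain k where k: "(d * d' + 1) * g * g' = 2 * k" by (rule evenE)
      have "(real (d * d') + 1) * gval n d \<pi> * gval n' d' \<pi>' = real ((d * d' + 1) * g * g')"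
        unfolding g(1) g'(1) by (simp add: algebra_simps)
      also have "\<dots> = 2 * real_of_int (int k)" using k by simp
      finally show ?thesis by blast
    qed
    show "spinorial ?G (d * d') (\<lambda>\<sigma>. ext_tensor \<pi> \<pi>' (\<sigma>, id)) \<and>
      spinorial ?H (d * d') (\<lambda>\<tau>. ext_tensor \<pi> \<pi>' (id, \<tau>)) \<and>
      (\<exists>k::int. (real (d * d') + 1) * gval n d \<pi> * gval n' d' \<pi>' = 2 * real_of_int k)"
      using S1 S2 S3 by blast
  next
    assume A: "spinorial ?G (d * d') (\<lambda>\<sigma>. ext_tensor \<pi> \<pi>' (\<sigma>, id)) \<and>
      spinorial ?H (d * d') (\<lambda>\<tau>. ext_tensor \<pi> \<pi>' (id, \<tau>)) \<and>
      (\<exists>k::int. (real (d * d') + 1) * gval n d \<pi> * gval n' d' \<pi>' = 2 * real_of_int k)"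
    then obtain \<phi> where \<phi>L: "\<And>s. s \<in> carrier ?G \<Longrightarrow> \<phi> s \<in> Pin N \<and> pin_rho N (\<phi> s) = ext_tensor \<pi> \<pi>' (s, id)"
      and \<phi>H: "\<And>s t. s \<in> carrier ?G \<Longrightarrow> t \<in> carrier ?G \<Longrightarrow> \<phi> (s \<circ> t) = cl_mult N (\<phi> s) (\<phi> t)"
      unfolding spinorial_def N_def sym_group_mult by blast
    obtain \<psi> where \<psi>L: "\<And>s. s \<in> carrier ?H \<Longrightarrow> \<psi> s \<in> Pin N \<and> pin_rho N (\<psi> s) = ext_tensor \<pi> \<pi>' (id, s)"
      and \<psi>H: "\<And>s t. s \<in> carrier ?H \<Longrightarrow> t \<in> carrier ?H \<Longrightarrow> \<psi> (s \<circ> t) = cl_mult N (\<psi> s) (\<psi> t)"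
      using A unfolding spinorial_def N_def sym_group_mult by blast
    obtain k :: int where k: "(real (d * d') + 1) * gval n d \<pi> * gval n' d' \<pi>' = 2 * real_of_int k"
      using A by blast
    have \<psi>id: "\<psi> id = cl_one"
      using Pin_one_of_idem[of "\<psi> id" N] \<psi>L[OF sym_carrier_id] \<psi>H[OF sym_carrier_id sym_carrier_id] by simp
    have \<phi>id: "\<phi> id = cl_one"
      using Pin_one_of_idem[of "\<phi> id" N] \<phi>L[OF sym_carrier_id] \<phi>H[OF sym_carrier_id sym_carrier_id] by simp
    have commT: "cl_mult N (\<phi> (Transposition.transpose a b)) (\<psi> (Transposition.transpose a' b')) =
        cl_mult N (\<psi> (Transposition.transpose a' b')) (\<phi> (Transposition.transpose a b))"
      if a: "a \<in> {1..n}" and b: "b \<in> {1..n}" and ab: "a \<noteq> b"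
        and a': "a' \<in> {1..n'}" and b': "b' \<in> {1..n'}" and ab': "a' \<noteq> b'" for a b a' b'
    proof -
      have n2: "2 \<le> n" and n2': "2 \<le> n'" using a b ab a' b' ab' by auto
      let ?t = "Transposition.transpose a b" and ?t' = "Transposition.transpose a' b'"
      have tc: "?t \<in> carrier ?G" and tc': "?t' \<in> carrier ?H" using a b a' b' by (auto intro: transp_carrier)
      obtain g where g: "gval n d \<pi> = real g" "real d - 2 * real g = (\<Sum>i<d. \<pi> s1 $$ (i, i))"
        using gval_nat[OF r n2] by blast
      obtain g' where g': "gval n' d' \<pi>' = real g'" "real d' - 2 * real g' = (\<Sum>i<d'. \<pi>' s1 $$ (i, i))"
        using gval_nat[OF r' n2'] by blast
      have M: "\<pi> ?t \<in> carrier_mat d d" "transpose_mat (\<pi> ?t) * \<pi> ?t = 1\<^sub>m d" "\<pi> ?t * \<pi> ?t = 1\<^sub>m d"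
        using rep_transp[OF r a b] by auto
      have M': "\<pi>' ?t' \<in> carrier_mat d' d'" "transpose_mat (\<pi>' ?t') * \<pi>' ?t' = 1\<^sub>m d'" "\<pi>' ?t' * \<pi>' ?t' = 1\<^sub>m d'"
        using rep_transp[OF r' a' b'] by auto
      have s1c: "\<pi> s1 \<in> carrier_mat d d" using rep_transp[OF r, of 1 2] n2 by (auto simp: s1_def)
      have s1c': "\<pi>' s1 \<in> carrier_mat d' d'" using rep_transp[OF r', of 1 2] n2' by (auto simp: s1_def)
      have tr: "real d - 2 * real g = (\<Sum>i<d. \<pi> ?t $$ (i, i))"
        using g(2) char_transp[OF r a b ab] char_sum[of \<pi> ?t d, OF M(1)] char_sum[of \<pi> s1 d, OF s1c] by simp
      have tr': "real d' - 2 * real g' = (\<Sum>i<d'. \<pi>' ?t' $$ (i, i))"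
        using g'(2) char_transp[OF r' a' b' ab'] char_sum[of \<pi>' ?t' d', OF M'(1)] char_sum[of \<pi>' s1 d', OF s1c'] by simp
      have xP: "\<phi> ?t \<in> Pin N" and yP: "\<psi> ?t' \<in> Pin N" using \<phi>L[OF tc] \<psi>L[OF tc'] by auto
      have rx: "pin_rho N (\<phi> ?t) = kron (\<pi> ?t) (1\<^sub>m d')" using \<phi>L[OF tc] by (simp add: ext id2)
      have ry: "pin_rho N (\<psi> ?t') = kron (1\<^sub>m d) (\<pi>' ?t')" using \<psi>L[OF tc'] by (simp add: ext id1)
      have KLr: "cl_mult N (\<phi> ?t) (\<psi> ?t') = csc ((-1) ^ ((d * d' + 1) * g * g')) (cl_mult N (\<psi> ?t') (\<phi> ?t))"
        using KL[OF M M' xP[unfolded N_def] yP[unfolded N_def] rx[unfolded N_def] ry[unfolded N_def] tr tr']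
        by (simp add: N_def)
      have "real ((d * d' + 1) * g * g') = (real (d * d') + 1) * gval n d \<pi> * gval n' d' \<pi>'"
        unfolding g(1) g'(1) by (simp add: algebra_simps)
      then have "real ((d * d' + 1) * g * g') = 2 * real_of_int k" using k by simp
      then have "(-1::real) ^ ((d * d' + 1) * g * g') = 1" by (rule even_sign)
      then show ?thesis using KLr by simp
    qed
    have commT2: "cl_mult N (\<phi> (Transposition.transpose a b)) (\<psi> t) = cl_mult N (\<psi> t) (\<phi> (Transposition.transpose a b))"
      if a: "a \<in> {1..n}" and b: "b \<in> {1..n}" and ab: "a \<noteq> b" and t: "t \<in> carrier ?H" for a b t
    proof -
      have tp: "t permutes {1..n'}" using t by (simp add: sym_group_carrier)
      show ?thesis using tp finite_atLeastAtMost[of 1 n']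
      proof (induction t rule: permutes_induct)
        case id
        have "\<phi> (Transposition.transpose a b) \<in> cl_carrier N"
          using \<phi>L[OF transp_carrier[OF a b]] Pin_carrier by blast
        then show ?case using \<psi>id[unfolded id_def] by (simp add: cl_one_left cl_one_right)
      next
        case (swap a' b' p)
        have pc: "p \<in> carrier ?H" using swap by (simp add: sym_group_carrier)
        have tc': "Transposition.transpose a' b' \<in> carrier ?H" using swap by (intro transp_carrier) auto
        have e: "\<psi> (Transposition.transpose a' b' \<circ> p) = cl_mult N (\<psi> (Transposition.transpose a' b')) (\<psi> p)"
          by (rule \<psi>H[OF tc' pc])
        show ?case unfolding e
          using commT[OF a b ab, of a' b'] swap by (simp add: cl_assoc[symmetric]) (simp add: cl_assoc)
      qed
    qed
    have commAll: "cl_mult N (\<phi> s) (\<psi> t) = cl_mult N (\<psi> t) (\<phi> s)"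
      if s: "s \<in> carrier ?G" and t: "t \<in> carrier ?H" for s t
    proof -
      have sp: "s permutes {1..n}" using s by (simp add: sym_group_carrier)
      show ?thesis using sp finite_atLeastAtMost[of 1 n]
      proof (induction s rule: permutes_induct)
        case id
        have "\<psi> t \<in> cl_carrier N" using \<psi>L[OF t] Pin_carrier by blast
        then show ?case using \<phi>id[unfolded id_def] by (simp add: cl_one_left cl_one_right)
      next
        case (swap a b p)
        have pc: "p \<in> carrier ?G" using swap by (simp add: sym_group_carrier)
        have tc: "Transposition.transpose a b \<in> carrier ?G" using swap by (intro transp_carrier) auto
        have e: "\<phi> (Transposition.transpose a b \<circ> p) = cl_mult N (\<phi> (Transposition.transpose a b)) (\<phi> p)"
          by (rule \<phi>H[OF tc pc])
        show ?case unfolding e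
          using commT2[of a b t] swap t by (simp add: cl_assoc) (simp add: cl_assoc[symmetric])
      qed
    qed
    show "spinorial (?G \<times>\<times> ?H) (d * d') (ext_tensor \<pi> \<pi>')"
      unfolding spinorial_def N_def[symmetric]
    proof (intro exI[of _ "\<lambda>p. cl_mult N (\<phi> (fst p)) (\<psi> (snd p))"] conjI ballI)
      fix p assume p: "p \<in> carrier (?G \<times>\<times> ?H)"
      then obtain s t where st: "p = (s, t)" "s \<in> carrier ?G" "t \<in> carrier ?H" by auto
      have P1: "\<phi> s \<in> Pin N" "pin_rho N (\<phi> s) = kron (\<pi> s) (1\<^sub>m d')" using \<phi>L[OF st(2)] by (auto simp: ext id2)
      have P2: "\<psi> t \<in> Pin N" "pin_rho N (\<psi> t) = kron (1\<^sub>m d) (\<pi>' t)" using \<psi>L[OF st(3)] by (auto simp: ext id1)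
      show "cl_mult N (\<phi> (fst p)) (\<psi> (snd p)) \<in> Pin N" using st P1 P2 by (simp add: Pin_mult_closed)
      have "pin_rho N (cl_mult N (\<phi> s) (\<psi> t)) = kron (\<pi> s) (1\<^sub>m d') * kron (1\<^sub>m d) (\<pi>' t)"
        using pin_rho_mult[OF P1(1) P2(1)] P1 P2 by simp
      also have "\<dots> = kron (\<pi> s) (\<pi>' t)"
        by (rule kron_mixed) (use rep_mat[OF r st(2)] rep_mat[OF r' st(3)] in auto)
      finally show "pin_rho N (cl_mult N (\<phi> (fst p)) (\<psi> (snd p))) = ext_tensor \<pi> \<pi>' p"
        using st by (simp add: ext)
    next
      fix p q assume p: "p \<in> carrier (?G \<times>\<times> ?H)" and q: "q \<in> carrier (?G \<times>\<times> ?H)"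
      then obtain s t s' t' where st: "p = (s, t)" "s \<in> carrier ?G" "t \<in> carrier ?H"
        and st': "q = (s', t')" "s' \<in> carrier ?G" "t' \<in> carrier ?H" by auto
      have "cl_mult N (\<phi> (s \<circ> s')) (\<psi> (t \<circ> t')) = cl_mult N (cl_mult N (\<phi> s) (\<phi> s')) (cl_mult N (\<psi> t) (\<psi> t'))"
        using \<phi>H[OF st(2) st'(2)] \<psi>H[OF st(3) st'(3)] by simp
      also have "\<dots> = cl_mult N (\<phi> s) (cl_mult N (cl_mult N (\<phi> s') (\<psi> t)) (\<psi> t'))"
        by (simp add: cl_assoc)
      also have "\<dots> = cl_mult N (\<phi> s) (cl_mult N (cl_mult N (\<psi> t) (\<phi> s')) (\<psi> t'))"
        using commAll[OF st'(2) st(3)] by simp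
      also have "\<dots> = cl_mult N (cl_mult N (\<phi> s) (\<psi> t)) (cl_mult N (\<phi> s') (\<psi> t'))"
        by (simp add: cl_assoc)
      finally show "cl_mult N (\<phi> (fst (p \<otimes>\<^bsub>?G \<times>\<times> ?H\<^esub> q))) (\<psi> (snd (p \<otimes>\<^bsub>?G \<times>\<times> ?H\<^esub> q))) =
         cl_mult N (cl_mult N (\<phi> (fst p)) (\<psi> (snd p))) (cl_mult N (\<phi> (fst q)) (\<psi> (snd q)))"
        using st st' by (simp add: DirProd_def sym_group_mult)
    qed
  qed
qed

end
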